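(* Let $C>0$. Let $G=(V,E)$ be a graph with $n:=|V|\sim CM\log M$ (as $M\to\infty$), and let $\Phi$ be an $M\times n$ matrix with columns $\{\varphi_i\}_{i\in V}$ whose entries are drawn independently from $\mathbb{C}\mathcal{N}(0,\frac1M)$. Then for each proportion $\alpha<1-\frac{1}{2C}$ there exists a constant $C'>0$ such that, with overwhelming probability, \[ \max\Big\{\|\varepsilon\|_2,\ \sqrt{M}\,\mathrm{PUN}(\Phi;\alpha,\varepsilon)\Big\}\geq\frac{C'}{\sqrt{M}} \] for every noise vector $\varepsilon=\{\varepsilon_{ij}\}_{\{i,j\}\in E}$ of complex numbers.
   Context: $\mathbb{C}\mathcal{N}(0,\sigma^2)$ is the complex Gaussian with independent $\mathcal{N}(0,\sigma^2/2)$ real and imaginary parts. "With overwhelming probability" means with probability at least $1-c_0\mathrm{e}^{-c_1M}$ for constants $c_0,c_1>0$ independent of $M$. Algorithm 1 (pruning for reliability): given a graph $G=(V,E)$, $f:E\to\mathbb{R}$ and $\alpha\in(0,1)$, starting from $H=G$ repeat $\lfloor(1-\alpha)|V|\rfloor$ times: find an edge $\{i,j\}$ of $H$ minimizing $f$ and delete both vertices $i,j$ from $H$. Projective uniformity with noise: for $\alpha\in(0,1)$, $x\in\mathbb{C}^M$ and $\varepsilon$, let $\mathcal{J}(\alpha,x,\varepsilon)$ be the set of vertices remaining after applying Algorithm 1 with $f(i,j)=|\overline{\langle x,\varphi_i\rangle}\langle x,\varphi_j\rangle+\varepsilon_{ij}|$. Then \[ \mathrm{PUN}(\Phi;\alpha,\varepsilon)=\min_{x\in\mathbb{C}^M,\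 \|x\|=1}\ \min_{\{i,j\}\in E,\ i,j\in\mathcal{J}(\alpha,x,\varepsilon)}|\overline{\langle x,\varphi_i\rangle}\langle x,\varphi_j\rangle+\varepsilon_{ij}|. \] *)

theory Defs
  imports "HOL-Probability.Probability" "HOL-Library.Landau_Symbols"
begin

text \<open>Vectors in C^M are functions nat => complex; only coordinates k < M matter.
  An M x n matrix is a function on index pairs (row k, column i).\<close>

definition cinner :: "nat \<Rightarrow> (nat \<Rightarrow> complex) \<Rightarrow> (nat \<Rightarrow> complex) \<Rightarrow> complex" where
  "cinner M x y = (\<Sum>k<M. x k * cnj (y k))"

definition col :: "(nat \<times> nat \<Rightarrow> complex) \<Rightarrow> nat \<Rightarrow> (nat \<Rightarrow> complex)" where
  "col \<Phi> i = (\<lambda>k. \<Phi> (k, i))"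

text \<open>Edges are 2-element sets {i,j}; oriented with i = Min e < j = Max e.\<close>
definition fval :: "nat \<Rightarrow> (nat \<times> nat \<Rightarrow> complex) \<Rightarrow> (nat \<Rightarrow> complex) \<Rightarrow> (nat set \<Rightarrow> complex)
    \<Rightarrow> nat set \<Rightarrow> complex" where
  "fval M \<Phi> x \<epsilon> e = cnj (cinner M x (col \<Phi> (Min e))) * cinner M x (col \<Phi> (Max e)) + \<epsilon> e"

text \<open>One step of Algorithm 1 on the current vertex set H: delete both endpoints of an
  edge of the induced subgraph minimising f (any minimiser); if no edge remains, nothing happens.\<close>
definition prune_step :: "nat set set \<Rightarrow> (nat set \<Rightarrow> real) \<Rightarrow> nat set \<Rightarrow> nat set \<Rightarrow> bool" where
  "prune_step E f H H' \<longleftrightarrow>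
     (\<exists>e\<in>E. e \<subseteq> H \<and> (\<forall>e'\<in>E. e' \<subseteq> H \<longrightarrow> f e \<le> f e') \<and> H' = H - e)
   \<or> ((\<forall>e\<in>E. \<not> e \<subseteq> H) \<and> H' = H)"

definition pruned_sets :: "nat set \<Rightarrow> nat set set \<Rightarrow> (nat set \<Rightarrow> real) \<Rightarrow> real \<Rightarrow> nat set set" where
  "pruned_sets V E f \<alpha> = {J. (prune_step E f ^^ nat \<lfloor>(1 - \<alpha>) * real (card V)\<rfloor>) V J}"

text \<open>Projective uniformity with noise (minimum over the empty set is +infinity;
  worst case over tie-breaking in Algorithm 1).\<close>
definition PUN :: "nat \<Rightarrow> nat \<Rightarrow> nat set set \<Rightarrow> (nat \<times> nat \<Rightarrow> complex) \<Rightarrow> real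
    \<Rightarrow> (nat set \<Rightarrow> complex) \<Rightarrow> ereal" where
  "PUN M n E \<Phi> \<alpha> \<epsilon> =
    (INF x \<in> {x. (\<Sum>k<M. (cmod (x k))\<^sup>2) = 1}.
      INF J \<in> pruned_sets {..<n} E (\<lambda>e. cmod (fval M \<Phi> x \<epsilon> e)) \<alpha>.
        INF e \<in> {e\<in>E. e \<subseteq> J}. ereal (cmod (fval M \<Phi> x \<epsilon> e)))"

definition noise_norm :: "nat set set \<Rightarrow> (nat set \<Rightarrow> complex) \<Rightarrow> real" where
  "noise_norm E \<epsilon> = sqrt (\<Sum>e\<in>E. (cmod (\<epsilon> e))\<^sup>2)"

text \<open>Complex Gaussian CN(0, s2): independent real and imaginary parts N(0, s2/2).\<close>
definition CN :: "real \<Rightarrow> complex measure" where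
  "CN s2 = distr (density lborel (normal_density 0 (sqrt (s2 / 2)))
                  \<Otimes>\<^sub>M density lborel (normal_density 0 (sqrt (s2 / 2))))
             borel (\<lambda>(a, b). Complex a b)"

definition gauss_matrix :: "nat \<Rightarrow> nat \<Rightarrow> (nat \<times> nat \<Rightarrow> complex) measure" where
  "gauss_matrix M n = PiM ({..<M} \<times> {..<n}) (\<lambda>_. CN (1 / real M))"

end

theory Submission
  imports Defs
begin

definition NN :: "real \<Rightarrow> real measure" where
  "NN \<sigma> = density lborel (normal_density 0 \<sigma>)"

lemma prob_NN: "\<sigma> > 0 \<Longrightarrow> prob_space (NN \<sigma>)"
  unfolding NN_def by (rule prob_space_normal_density) simp

lemma sets_NN[measurable_cong, simp]: "sets (NN \<sigma>) = sets borel"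
  unfolding NN_def by simp

lemma space_NN[simp]: "space (NN \<sigma>) = UNIV"
  unfolding NN_def by simp

lemma meas_Complex[measurable]: "(\<lambda>(a, b). Complex a b) \<in> borel_measurable (borel \<Otimes>\<^sub>M borel)"
proof -
  have "(\<lambda>(a, b). Complex a b) = (\<lambda>p. complex_of_real (fst p) + \<i> * complex_of_real (snd p))"
    by (auto simp: fun_eq_iff complex_eq_iff)
  then show ?thesis by simp
qed

lemma CN_alt: "CN s = distr (NN (sqrt (s/2)) \<Otimes>\<^sub>M NN (sqrt (s/2))) borel (\<lambda>(a, b). Complex a b)"
  unfolding CN_def NN_def by simp

lemma prob_CN: assumes "s > 0" shows "prob_space (CN s)"
proof -
  interpret A: prob_space "NN (sqrt (s/2))" using assms by (intro prob_NN) simp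
  interpret P: pair_prob_space "NN (sqrt (s/2))" "NN (sqrt (s/2))" ..
  show ?thesis unfolding CN_alt
    by (rule P.prob_space_distr) (simp add: measurable_cong_sets[OF sets_pair_measure_cong[OF sets_NN sets_NN]])
qed

lemma sets_CN[measurable_cong, simp]: "sets (CN s) = sets borel"
  unfolding CN_def by simp

lemma space_CN[simp]: "space (CN s) = UNIV"
  unfolding CN_def by simp


context
  fixes \<sigma> :: real assumes \<sigma>: "\<sigma> > 0"
begin

interpretation A: prob_space "NN \<sigma>" using \<sigma> by (rule prob_NN)
interpretation P: pair_prob_space "NN \<sigma>" "NN \<sigma>" ..

lemma P_fst: "distributed (NN \<sigma> \<Otimes>\<^sub>M NN \<sigma>) lborel fst (normal_density 0 \<sigma>)"
proof -
  have "distr (NN \<sigma> \<Otimes>\<^sub>M NN \<sigma>) lborel fst = distr (NN \<sigma> \<Otimes>\<^sub>M NN \<sigma>) (NN \<sigma>) fst"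
    by (rule distr_cong) auto
  also have "\<dots> = NN \<sigma>" by (rule A.distr_pair_fst)
  finally show ?thesis unfolding distributed_def NN_def by simp
qed

lemma P_snd: "distributed (NN \<sigma> \<Otimes>\<^sub>M NN \<sigma>) lborel snd (normal_density 0 \<sigma>)"
proof -
  have m1: "fst \<in> NN \<sigma> \<Otimes>\<^sub>M NN \<sigma> \<rightarrow>\<^sub>M lborel"
    by (simp add: measurable_cong_sets[OF sets_pair_measure_cong[OF sets_NN sets_NN]])
  have m2: "(\<lambda>(x, y). (y, x)) \<in> NN \<sigma> \<Otimes>\<^sub>M NN \<sigma> \<rightarrow>\<^sub>M NN \<sigma> \<Otimes>\<^sub>M NN \<sigma>" by (rule measurable_pair_swap')
  have "distr (distr (NN \<sigma> \<Otimes>\<^sub>M NN \<sigma>) (NN \<sigma> \<Otimes>\<^sub>M NN \<sigma>) (\<lambda>(x, y). (y, x))) lborel fst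
     = distr (NN \<sigma> \<Otimes>\<^sub>M NN \<sigma>) lborel (fst \<circ> (\<lambda>(x, y). (y, x)))"
    by (rule distr_distr[OF m1 m2])
  also have "\<dots> = distr (NN \<sigma> \<Otimes>\<^sub>M NN \<sigma>) lborel snd"
    by (rule distr_cong) auto
  finally have "distr (NN \<sigma> \<Otimes>\<^sub>M NN \<sigma>) lborel snd = distr (NN \<sigma> \<Otimes>\<^sub>M NN \<sigma>) lborel fst"
    using P.distr_pair_swap[symmetric] by simp
  then show ?thesis using P_fst unfolding distributed_def 
    by (simp add: measurable_cong_sets[OF sets_pair_measure_cong[OF sets_NN sets_NN]])
qed


lemma P_indep: "prob_space.indep_var (NN \<sigma> \<Otimes>\<^sub>M NN \<sigma>) borel fst borel snd"
proof -
  have S: "sets (NN \<sigma> \<Otimes>\<^sub>M NN \<sigma>) = sets (borel \<Otimes>\<^sub>M borel)"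
    by (rule sets_pair_measure_cong) simp_all
  have e: "distr (NN \<sigma> \<Otimes>\<^sub>M NN \<sigma>) (borel \<Otimes>\<^sub>M borel) (\<lambda>x. (fst x, snd x)) = NN \<sigma> \<Otimes>\<^sub>M NN \<sigma>"
  proof -
    have "distr (NN \<sigma> \<Otimes>\<^sub>M NN \<sigma>) (borel \<Otimes>\<^sub>M borel) (\<lambda>x. (fst x, snd x)) = distr (NN \<sigma> \<Otimes>\<^sub>M NN \<sigma>) (borel \<Otimes>\<^sub>M borel) (\<lambda>x. x)"
      by (rule distr_cong) auto
    also have "\<dots> = NN \<sigma> \<Otimes>\<^sub>M NN \<sigma>" by (rule distr_id2) (simp add: S)
    finally show ?thesis .
  qed
  have f: "distr (NN \<sigma> \<Otimes>\<^sub>M NN \<sigma>) borel fst = NN \<sigma>"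
  proof -
    have "distr (NN \<sigma> \<Otimes>\<^sub>M NN \<sigma>) borel fst = distr (NN \<sigma> \<Otimes>\<^sub>M NN \<sigma>) lborel fst"
      by (rule distr_cong) auto
    then show ?thesis using P_fst unfolding distributed_def NN_def by simp
  qed
  have s: "distr (NN \<sigma> \<Otimes>\<^sub>M NN \<sigma>) borel snd = NN \<sigma>"
  proof -
    have "distr (NN \<sigma> \<Otimes>\<^sub>M NN \<sigma>) borel snd = distr (NN \<sigma> \<Otimes>\<^sub>M NN \<sigma>) lborel snd"
      by (rule distr_cong) auto
    then show ?thesis using P_snd unfolding distributed_def NN_def by simp
  qed
  have m1: "fst \<in> NN \<sigma> \<Otimes>\<^sub>M NN \<sigma> \<rightarrow>\<^sub>M borel"
    by (simp add: measurable_cong_sets[OF S])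
  have m2: "snd \<in> NN \<sigma> \<Otimes>\<^sub>M NN \<sigma> \<rightarrow>\<^sub>M borel"
    by (simp add: measurable_cong_sets[OF S])
  show ?thesis
    unfolding P.indep_var_distribution_eq using m1 m2 e f s
    by simp
qed

lemma P_lin:
  assumes ab: "a \<noteq> 0 \<or> b \<noteq> 0"
  shows "distributed (NN \<sigma> \<Otimes>\<^sub>M NN \<sigma>) lborel (\<lambda>x. a * fst x + b * snd x)
           (normal_density 0 (sqrt (a\<^sup>2 + b\<^sup>2) * \<sigma>))"
proof -
  have S: "sets (NN \<sigma> \<Otimes>\<^sub>M NN \<sigma>) = sets (borel \<Otimes>\<^sub>M borel)"
    by (rule sets_pair_measure_cong) simp_all
  have A: "a \<noteq> 0 \<Longrightarrow> distributed (NN \<sigma> \<Otimes>\<^sub>M NN \<sigma>) lborel (\<lambda>x. 0 + a * fst x) (normal_density (0 + a * 0) (\<bar>a\<bar> * \<sigma>))"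
    by (rule P.normal_density_affine[OF P_fst \<sigma>])
  have B: "b \<noteq> 0 \<Longrightarrow> distributed (NN \<sigma> \<Otimes>\<^sub>M NN \<sigma>) lborel (\<lambda>x. 0 + b * snd x) (normal_density (0 + b * 0) (\<bar>b\<bar> * \<sigma>))"
    by (rule P.normal_density_affine[OF P_snd \<sigma>])
  consider "a \<noteq> 0" "b \<noteq> 0" | "a \<noteq> 0" "b = 0" | "a = 0" "b \<noteq> 0" using ab by blast
  then show ?thesis
  proof cases
    case 1
    have ind: "prob_space.indep_var (NN \<sigma> \<Otimes>\<^sub>M NN \<sigma>) borel ((\<lambda>x. a * x) \<circ> fst) borel ((\<lambda>x. b * x) \<circ> snd)"
      by (rule P.indep_var_compose[OF P_indep]) simp_all
    have "distributed (NN \<sigma> \<Otimes>\<^sub>M NN \<sigma>) lborel (\<lambda>x. ((\<lambda>x. a * x) \<circ> fst) x + ((\<lambda>x. b * x) \<circ> snd) x)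
           (normal_density (0 + 0) (sqrt ((\<bar>a\<bar> * \<sigma>)\<^sup>2 + (\<bar>b\<bar> * \<sigma>)\<^sup>2)))"
      by (rule P.add_indep_normal[OF ind]) (use 1 A B \<sigma> in \<open>auto simp: comp_def\<close>)
    moreover have "sqrt ((\<bar>a\<bar> * \<sigma>)\<^sup>2 + (\<bar>b\<bar> * \<sigma>)\<^sup>2) = sqrt (a\<^sup>2 + b\<^sup>2) * \<sigma>"
    proof -
      have "(\<bar>a\<bar> * \<sigma>)\<^sup>2 + (\<bar>b\<bar> * \<sigma>)\<^sup>2 = \<sigma>\<^sup>2 * (a\<^sup>2 + b\<^sup>2)" by (simp add: power_mult_distrib algebra_simps)
      then show ?thesis using \<sigma> by (simp add: real_sqrt_mult)
    qed
    ultimately show ?thesis by simp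
  next
    case 2 then show ?thesis using A by simp
  next
    case 3 then show ?thesis using B by simp
  qed
qed
end

lemma CN_lin:
  assumes s: "s > 0" and c: "c \<noteq> 0"
  shows "distributed (CN s) lborel (\<lambda>z. Re (c * cnj z)) (normal_density 0 (cmod c * sqrt (s / 2)))"
proof -
  define \<sigma> where "\<sigma> = sqrt (s / 2)"
  have \<sigma>: "\<sigma> > 0" using s by (simp add: \<sigma>_def)
  have S: "sets (NN \<sigma> \<Otimes>\<^sub>M NN \<sigma>) = sets (borel \<Otimes>\<^sub>M borel)"
    by (rule sets_pair_measure_cong) simp_all
  have ab: "Re c \<noteq> 0 \<or> Im c \<noteq> 0" using c by (auto simp: complex_eq_iff)
  have D: "distributed (NN \<sigma> \<Otimes>\<^sub>M NN \<sigma>) lborel (\<lambda>x. Re c * fst x + Im c * snd x)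
           (normal_density 0 (sqrt ((Re c)\<^sup>2 + (Im c)\<^sup>2) * \<sigma>))"
    by (rule P_lin[OF \<sigma> ab])
  have mC: "(\<lambda>(a, b). Complex a b) \<in> NN \<sigma> \<Otimes>\<^sub>M NN \<sigma> \<rightarrow>\<^sub>M borel"
    by (simp add: measurable_cong_sets[OF S])
  have mg: "(\<lambda>z. Re (c * cnj z)) \<in> borel \<rightarrow>\<^sub>M lborel" by simp
  have "distr (CN s) lborel (\<lambda>z. Re (c * cnj z)) = distr (NN \<sigma> \<Otimes>\<^sub>M NN \<sigma>) lborel ((\<lambda>z. Re (c * cnj z)) \<circ> (\<lambda>(a, b). Complex a b))"
    unfolding CN_alt \<sigma>_def[symmetric] by (rule distr_distr[OF mg mC])
  also have "\<dots> = distr (NN \<sigma> \<Otimes>\<^sub>M NN \<sigma>) lborel (\<lambda>x. Re c * fst x + Im c * snd x)"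
    by (rule distr_cong) auto
  finally have E: "distr (CN s) lborel (\<lambda>z. Re (c * cnj z)) = distr (NN \<sigma> \<Otimes>\<^sub>M NN \<sigma>) lborel (\<lambda>x. Re c * fst x + Im c * snd x)" .
  have "cmod c = sqrt ((Re c)\<^sup>2 + (Im c)\<^sup>2)" by (simp add: cmod_def)
  then show ?thesis using D E unfolding distributed_def \<sigma>_def
    by (simp add: measurable_cong_sets[OF sets_CN])
qed


lemma nd_le: "\<tau> > 0 \<Longrightarrow> normal_density 0 \<tau> x \<le> 1 / (\<tau> * sqrt (2 * pi))"
proof -
  assume t: "\<tau> > 0"
  have "normal_density 0 \<tau> x = 1 / sqrt (2 * pi * \<tau>\<^sup>2) * exp (-(x - 0)\<^sup>2/ (2 * \<tau>\<^sup>2))"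
    by (simp add: normal_density_def)
  also have "\<dots> \<le> 1 / sqrt (2 * pi * \<tau>\<^sup>2) * 1"
    by (intro mult_left_mono) (auto simp: t)
  also have "sqrt (2 * pi * \<tau>\<^sup>2) = \<tau> * sqrt (2 * pi)"
    using t by (simp add: real_sqrt_mult mult.commute)
  finally show ?thesis by simp
qed

lemma small_ball_normal:
  assumes D: "distributed M lborel X (normal_density 0 \<tau>)" and t: "\<tau> > 0" and u: "u \<ge> 0"
  shows "emeasure M {\<omega>\<in>space M. \<bar>X \<omega>\<bar> < u} \<le> ennreal (2 * u / (\<tau> * sqrt (2 * pi)))"
proof -
  have mX: "X \<in> M \<rightarrow>\<^sub>M lborel" using D by (rule distributed_measurable)
  have set: "{\<omega>\<in>space M. \<bar>X \<omega>\<bar> < u} = X -` {-u<..<u} \<inter> space M" by auto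
  have "emeasure M {\<omega>\<in>space M. \<bar>X \<omega>\<bar> < u} = emeasure (distr M lborel X) {-u<..<u}"
    unfolding set by (rule emeasure_distr[symmetric, OF mX]) simp
  also have "\<dots> = emeasure (density lborel (normal_density 0 \<tau>)) {-u<..<u}"
    using D by (simp add: distributed_def)
  also have "\<dots> = (\<integral>\<^sup>+x. ennreal (normal_density 0 \<tau> x) * indicator {-u<..<u} x \<partial>lborel)"
    by (simp add: emeasure_density)
  also have "\<dots> \<le> (\<integral>\<^sup>+x. ennreal (1 / (\<tau> * sqrt (2 * pi))) * indicator {-u<..<u} x \<partial>lborel)"
    by (intro nn_integral_mono mult_right_mono) (auto intro!: ennreal_leI nd_le[OF t])
  also have "\<dots> = ennreal (1 / (\<tau> * sqrt (2 * pi))) * emeasure lborel {-u<..<u}"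
    by (simp add: nn_integral_cmult_indicator)
  also have "\<dots> = ennreal (1 / (\<tau> * sqrt (2 * pi))) * ennreal (2 * u)"
    using u by simp
  also have "\<dots> = ennreal (2 * u / (\<tau> * sqrt (2 * pi)))"
    using t u by (simp add: ennreal_mult'[symmetric])
  finally show ?thesis .
qed

lemma tail_normal:
  assumes D: "distributed M lborel X (normal_density 0 \<tau>)" and t: "\<tau> > 0" and r: "r > 0"
  shows "emeasure M {\<omega>\<in>space M. \<bar>X \<omega>\<bar> \<ge> r} \<le> ennreal (\<tau>\<^sup>2 / r\<^sup>2)"
proof -
  have mX: "X \<in> M \<rightarrow>\<^sub>M lborel" using D by (rule distributed_measurable)
  define A where "A = {x::real. \<bar>x\<bar> \<ge> r}"
  have Ab: "A \<in> sets borel" unfolding A_def by measurable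
  have set: "{\<omega>\<in>space M. \<bar>X \<omega>\<bar> \<ge> r} = X -` A \<inter> space M" by (auto simp: A_def)
  have "emeasure M {\<omega>\<in>space M. \<bar>X \<omega>\<bar> \<ge> r} = emeasure (distr M lborel X) A"
    unfolding set by (rule emeasure_distr[symmetric, OF mX]) (simp add: Ab)
  also have "\<dots> = emeasure (density lborel (normal_density 0 \<tau>)) A"
    using D by (simp add: distributed_def)
  also have "\<dots> = (\<integral>\<^sup>+x. ennreal (normal_density 0 \<tau> x) * indicator A x \<partial>lborel)"
    using Ab by (simp add: emeasure_density)
  also have "\<dots> \<le> (\<integral>\<^sup>+x. ennreal (normal_density 0 \<tau> x * (x - 0) ^ (2 * 1) / r\<^sup>2) \<partial>lborel)"
  proof (intro nn_integral_mono)
    fix x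
    show "ennreal (normal_density 0 \<tau> x) * indicator A x \<le> ennreal (normal_density 0 \<tau> x * (x - 0) ^ (2 * 1) / r\<^sup>2)"
    proof (cases "x \<in> A")
      case True
      then have "r\<^sup>2 \<le> x\<^sup>2" using r power_mono[of r "\<bar>x\<bar>" 2] unfolding A_def by simp
      then have "1 \<le> x\<^sup>2 / r\<^sup>2" using r by simp
      then have "normal_density 0 \<tau> x * 1 \<le> normal_density 0 \<tau> x * (x\<^sup>2 / r\<^sup>2)"
        by (intro mult_left_mono) auto
      then show ?thesis using True by (simp add: ennreal_leI)
    next
      case False then show ?thesis by simp
    qed
  qed
  also have "\<dots> = ennreal (\<integral>x. normal_density 0 \<tau> x * (x - 0) ^ (2 * 1) / r\<^sup>2 \<partial>lborel)"
    proof -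
    have I: "integrable lborel (\<lambda>x. normal_density 0 \<tau> x * x\<^sup>2)"
      using integrable_normal_moment[OF t, of 0 2] by simp
    show ?thesis by (rule nn_integral_eq_integral) (use I in \<open>auto intro!: integrable_divide\<close>)
  qed
  also have "(\<integral>x. normal_density 0 \<tau> x * (x - 0) ^ (2 * 1) / r\<^sup>2 \<partial>lborel) = \<tau>\<^sup>2 / r\<^sup>2"
    using integral_normal_moment_even[where k=1 and \<mu>=0 and \<sigma>=\<tau>, OF t] by (simp add: power2_eq_square)
  finally show ?thesis .
qed


lemma (in prob_space) count_bound:
  assumes ind: "indep_vars N X {..<n}"
    and B: "\<And>i. i < n \<Longrightarrow> B i \<in> sets (N i)"
    and p: "\<And>i. i < n \<Longrightarrow> prob (X i -` B i \<inter> space M) \<le> r"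
    and K: "K \<ge> 1" and r: "r \<ge> 0"
  shows "prob {\<omega>\<in>space M. K \<le> card {i. i < n \<and> X i \<omega> \<in> B i}} \<le> 2 ^ n * r ^ K"
proof -
  define \<S> where "\<S> = {S. S \<subseteq> {..<n} \<and> card S = K}"
  define F where "F S = (\<Inter>i\<in>S. X i -` B i \<inter> space M)" for S
  have fin: "finite \<S>" unfolding \<S>_def by (rule finite_subset[of _ "Pow {..<n}"]) auto
  have Fs: "F S \<in> events" if "S \<in> \<S>" for S
  proof -
    have "S \<noteq> {}" "finite S" using that K unfolding \<S>_def by (auto intro: finite_subset)
    moreover have "X i -` B i \<inter> space M \<in> events" if "i \<in> S" for i
      using ind that \<open>S \<in> \<S>\<close> B unfolding indep_vars_def \<S>_def
      by (auto intro!: measurable_sets)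
    ultimately show ?thesis unfolding F_def by (intro sets.finite_INT) auto
  qed
  have sub: "{\<omega>\<in>space M. K \<le> card {i. i < n \<and> X i \<omega> \<in> B i}} \<subseteq> (\<Union>S\<in>\<S>. F S)"
  proof
    fix \<omega> assume "\<omega> \<in> {\<omega>\<in>space M. K \<le> card {i. i < n \<and> X i \<omega> \<in> B i}}"
    then have w: "\<omega> \<in> space M" and c: "K \<le> card {i. i < n \<and> X i \<omega> \<in> B i}" by auto
    obtain T where T: "T \<subseteq> {i. i < n \<and> X i \<omega> \<in> B i}" "card T = K" "finite T"
      using obtain_subset_with_card_n[OF c] by blast
    have "T \<in> \<S>" using T unfolding \<S>_def by auto
    moreover have "\<omega> \<in> F T" using T w unfolding F_def using K by auto
    ultimately show "\<omega> \<in> (\<Union>S\<in>\<S>. F S)" by blast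
  qed
  have "prob {\<omega>\<in>space M. K \<le> card {i. i < n \<and> X i \<omega> \<in> B i}} \<le> prob (\<Union>S\<in>\<S>. F S)"
    using sub Fs fin by (intro finite_measure_mono) auto
  also have "\<dots> \<le> (\<Sum>S\<in>\<S>. prob (F S))"
    using fin Fs by (intro measure_UNION_le) auto
  also have "\<dots> \<le> (\<Sum>S\<in>\<S>. r ^ K)"
  proof (intro sum_mono)
    fix S assume S: "S \<in> \<S>"
    then have Sn: "S \<noteq> {}" "finite S" "S \<subseteq> {..<n}" "card S = K" using K unfolding \<S>_def
      by (auto intro: finite_subset)
    have "prob (F S) = (\<Prod>i\<in>S. prob (X i -` B i \<inter> space M))"
      unfolding F_def by (rule indep_varsD[OF ind]) (use Sn B in auto)
    also have "\<dots> \<le> (\<Prod>i\<in>S. r)"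
      using Sn p by (intro prod_mono) auto
    also have "\<dots> = r ^ K" using Sn by simp
    finally show "prob (F S) \<le> r ^ K" .
  qed
  also have "\<dots> = real (card \<S>) * r ^ K" by simp
  also have "\<dots> \<le> 2 ^ n * r ^ K"
  proof -
    have "card \<S> \<le> card (Pow {..<n::nat})"
      by (rule card_mono) (auto simp: \<S>_def)
    also have "\<dots> = 2 ^ n" by (simp add: card_Pow)
    finally have "real (card \<S>) \<le> 2 ^ n" by (metis of_nat_le_iff of_nat_numeral of_nat_power)
    then show ?thesis using r by (intro mult_right_mono) auto
  qed
  finally show ?thesis .
qed


definition bad :: "nat \<Rightarrow> (nat \<Rightarrow> complex) \<Rightarrow> real \<Rightarrow> real \<Rightarrow> (nat \<times> nat \<Rightarrow> complex) \<Rightarrow> nat \<Rightarrow> bool" where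
  "bad M y T u \<omega> i \<longleftrightarrow> (\<exists>k<M. cmod (\<omega> (k, i)) \<ge> T) \<or> cmod (cinner M y (col \<omega> i)) < u"

lemma measure_le_from_emeasure:
  assumes "emeasure M A \<le> ennreal c" "c \<ge> 0"
  shows "measure M A \<le> c"
proof -
  have "enn2real (emeasure M A) \<le> enn2real (ennreal c)"
    using assms by (intro enn2real_mono) auto
  then show ?thesis using assms by (simp add: measure_def)
qed

context
  fixes s :: real and I :: "(nat \<times> nat) set"
  assumes s: "s > 0" and fin: "finite I"
begin

interpretation P: finite_product_prob_space "\<lambda>_. CN s" I
proof -
  have "prob_space (CN s)" using s by (rule prob_CN)
  then interpret CN: prob_space "CN s" .
  show "finite_product_prob_space (\<lambda>_. CN s) I"
    by unfold_locales (auto simp: fin intro: CN.prob_space_axioms)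
qed

lemma Om_prob: "prob_space (PiM I (\<lambda>_. CN s))"
  by (rule P.prob_space_axioms)

lemma Om_lin_entry:
  assumes j: "j \<in> I" and c: "c \<noteq> 0"
  shows "distributed (PiM I (\<lambda>_. CN s)) lborel (\<lambda>\<omega>. Re (c * cnj (\<omega> j))) (normal_density 0 (cmod c * sqrt (s / 2)))"
proof -
  have D: "distributed (CN s) lborel (\<lambda>z. Re (c * cnj z)) (normal_density 0 (cmod c * sqrt (s / 2)))"
    by (rule CN_lin[OF s c])
  have m1: "(\<lambda>\<omega>. \<omega> j) \<in> PiM I (\<lambda>_. CN s) \<rightarrow>\<^sub>M CN s" using j by simp
  have m2: "(\<lambda>z. Re (c * cnj z)) \<in> CN s \<rightarrow>\<^sub>M lborel" by (simp add: measurable_cong_sets[OF sets_CN])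
  have "distr (PiM I (\<lambda>_. CN s)) lborel (\<lambda>\<omega>. Re (c * cnj (\<omega> j))) = distr (distr (PiM I (\<lambda>_. CN s)) (CN s) (\<lambda>\<omega>. \<omega> j)) lborel (\<lambda>z. Re (c * cnj z))"
    by (subst distr_distr[OF m2 m1]) (simp add: comp_def)
  also have "\<dots> = distr (CN s) lborel (\<lambda>z. Re (c * cnj z))"
    by (simp add: P.PiM_component[OF j])
  moreover have m3: "(\<lambda>\<omega>. Re (c * cnj (\<omega> j))) \<in> PiM I (\<lambda>_. CN s) \<rightarrow>\<^sub>M lborel"
    using measurable_comp[OF m1 m2] by (simp add: comp_def)
  ultimately show ?thesis using D unfolding distributed_def by (simp only:)
qed

lemma Om_indep:
  assumes t: "inj_on t J" "t ` J \<subseteq> I" and J: "J \<noteq> {}"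
  shows "prob_space.indep_vars (PiM I (\<lambda>_. CN s)) (\<lambda>_. CN s) (\<lambda>k \<omega>. \<omega> (t k)) J"
proof -
  have "finite J" using t fin by (metis finite_imageD finite_subset)
  have rv: "\<And>k. k \<in> J \<Longrightarrow> (\<lambda>\<omega>. \<omega> (t k)) \<in> PiM I (\<lambda>_. CN s) \<rightarrow>\<^sub>M CN s"
    using t by auto
  show ?thesis
  proof (subst P.indep_vars_iff_distr_eq_PiM'[OF J rv])
    show "distr (PiM I (\<lambda>_. CN s)) (\<Pi>\<^sub>M k\<in>J. CN s) (\<lambda>x. \<lambda>k\<in>J. x (t k)) = (\<Pi>\<^sub>M k\<in>J. distr (PiM I (\<lambda>_. CN s)) (CN s) (\<lambda>\<omega>. \<omega> (t k)))"
    proof -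
      have "(\<Pi>\<^sub>M k\<in>J. distr (PiM I (\<lambda>_. CN s)) (CN s) (\<lambda>\<omega>. \<omega> (t k))) = (\<Pi>\<^sub>M k\<in>J. CN s)"
        by (intro PiM_cong refl) (use t in \<open>auto simp: P.PiM_component\<close>)
      moreover have "distr (PiM I (\<lambda>_. CN s)) (\<Pi>\<^sub>M k\<in>J. CN s) (\<lambda>x. \<lambda>k\<in>J. x (t k)) = (\<Pi>\<^sub>M k\<in>J. CN s)"
        using P.distr_reorder[of t J I] t fin by auto
      ultimately show ?thesis by simp
    qed
  qed
qed


lemma Om_comp_meas:
  assumes "j \<in> I" and f: "f \<in> borel_measurable borel"
  shows "(\<lambda>\<omega>. f (\<omega> j)) \<in> borel_measurable (PiM I (\<lambda>_. CN s))"
proof -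
  have "(\<lambda>\<omega>. \<omega> j) \<in> PiM I (\<lambda>_. CN s) \<rightarrow>\<^sub>M CN s" using assms by simp
  moreover have "f \<in> CN s \<rightarrow>\<^sub>M borel" using f by (simp add: measurable_cong_sets[OF sets_CN])
  ultimately show ?thesis using measurable_comp by (auto simp: comp_def)
qed

lemma Om_cinner_meas:
  assumes i: "{..<M} \<times> {i} \<subseteq> I"
  shows "(\<lambda>\<omega>. cinner M y (col \<omega> i)) \<in> borel_measurable (PiM I (\<lambda>_. CN s))"
  unfolding cinner_def col_def
proof (rule borel_measurable_sum)
  fix k assume "k \<in> {..<M}"
  then have "(k, i) \<in> I" using i by auto
  then show "(\<lambda>\<omega>. y k * cnj (\<omega> (k, i))) \<in> borel_measurable (PiM I (\<lambda>_. CN s))"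
    by (rule Om_comp_meas[where f="\<lambda>z. y k * cnj z"]) (intro borel_measurable_continuous_onI continuous_intros)
qed

lemma Om_sum:
  assumes i: "{..<M} \<times> {i} \<subseteq> I" and K: "{k. k < M \<and> y k \<noteq> 0} \<noteq> {}"
  shows "distributed (PiM I (\<lambda>_. CN s)) lborel (\<lambda>\<omega>. Re (cinner M y (col \<omega> i)))
           (normal_density 0 (sqrt (s / 2) * sqrt (\<Sum>k<M. (cmod (y k))\<^sup>2)))"
proof -
  define Ks where "Ks = {k. k < M \<and> y k \<noteq> 0}"
  have Ksf: "finite Ks" unfolding Ks_def by simp
  have ind0: "prob_space.indep_vars (PiM I (\<lambda>_. CN s)) (\<lambda>_. CN s) (\<lambda>k \<omega>. \<omega> (k, i)) Ks"
    by (rule Om_indep) (use i K in \<open>auto simp: Ks_def inj_on_def\<close>)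
  have ind: "prob_space.indep_vars (PiM I (\<lambda>_. CN s)) (\<lambda>_. borel) (\<lambda>k \<omega>. Re (y k * cnj (\<omega> (k, i)))) Ks"
    using P.indep_vars_compose2[OF ind0, of "\<lambda>k z. Re (y k * cnj z)" "\<lambda>_. borel"]
    by (simp add: measurable_cong_sets[OF sets_CN])
  have D: "distributed (PiM I (\<lambda>_. CN s)) lborel (\<lambda>\<omega>. \<Sum>k\<in>Ks. Re (y k * cnj (\<omega> (k, i))))
      (normal_density (\<Sum>k\<in>Ks. 0) (sqrt (\<Sum>k\<in>Ks. (cmod (y k) * sqrt (s / 2))\<^sup>2)))"
  proof (rule P.sum_indep_normal[OF Ksf _ ind])
    show "Ks \<noteq> {}" using K by (simp add: Ks_def)
    fix k assume k: "k \<in> Ks"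
    then show "0 < cmod (y k) * sqrt (s / 2)" using s by (simp add: Ks_def)
    show "distributed (PiM I (\<lambda>_. CN s)) lborel (\<lambda>\<omega>. Re (y k * cnj (\<omega> (k, i)))) (normal_density 0 (cmod (y k) * sqrt (s / 2)))"
      by (rule Om_lin_entry) (use k i in \<open>auto simp: Ks_def\<close>)
  qed
  have eq1: "(\<lambda>\<omega>. Re (cinner M y (col \<omega> i))) = (\<lambda>\<omega>. \<Sum>k\<in>Ks. Re (y k * cnj (\<omega> (k, i))))"
  proof
    fix \<omega> :: "nat \<times> nat \<Rightarrow> complex"
    have "Re (cinner M y (col \<omega> i)) = (\<Sum>k<M. Re (y k * cnj (\<omega> (k, i))))"
      by (simp add: cinner_def col_def Re_sum)
    also have "\<dots> = (\<Sum>k\<in>Ks. Re (y k * cnj (\<omega> (k, i))))"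
      by (rule sum.mono_neutral_right) (auto simp: Ks_def)
    finally show "Re (cinner M y (col \<omega> i)) = (\<Sum>k\<in>Ks. Re (y k * cnj (\<omega> (k, i))))" .
  qed
  have eq2: "(\<Sum>k\<in>Ks. (cmod (y k) * sqrt (s / 2))\<^sup>2) = (s / 2) * (\<Sum>k<M. (cmod (y k))\<^sup>2)"
  proof -
    have "(\<Sum>k\<in>Ks. (cmod (y k) * sqrt (s / 2))\<^sup>2) = (\<Sum>k\<in>Ks. (s / 2) * (cmod (y k))\<^sup>2)"
      using s by (intro sum.cong) (auto simp: power_mult_distrib)
    also have "\<dots> = (s / 2) * (\<Sum>k\<in>Ks. (cmod (y k))\<^sup>2)" by (simp add: sum_distrib_left)
    also have "(\<Sum>k\<in>Ks. (cmod (y k))\<^sup>2) = (\<Sum>k<M. (cmod (y k))\<^sup>2)"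
      by (rule sum.mono_neutral_left) (auto simp: Ks_def)
    finally show ?thesis .
  qed
  have eq3: "sqrt (s / 2 * (\<Sum>k<M. (cmod (y k))\<^sup>2)) = sqrt (s / 2) * sqrt (\<Sum>k<M. (cmod (y k))\<^sup>2)"
    by (rule real_sqrt_mult)
  show ?thesis using D unfolding eq1 eq2 eq3 sum.neutral_const .
qed

lemma Om_small:
  assumes i: "{..<M} \<times> {i} \<subseteq> I" and L: "L > 0" "(\<Sum>k<M. (cmod (y k))\<^sup>2) \<ge> L" and u: "u \<ge> 0"
  shows "measure (PiM I (\<lambda>_. CN s)) {\<omega>\<in>space (PiM I (\<lambda>_. CN s)). cmod (cinner M y (col \<omega> i)) < u}
           \<le> 2 * u / (sqrt (s / 2) * sqrt L * sqrt (2 * pi))"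
proof -
  let ?Om = "PiM I (\<lambda>_. CN s)"
  have K: "{k. k < M \<and> y k \<noteq> 0} \<noteq> {}"
  proof
    assume "{k. k < M \<and> y k \<noteq> 0} = {}"
    then have "(\<Sum>k<M. (cmod (y k))\<^sup>2) = 0" by (intro sum.neutral) auto
    then show False using L by simp
  qed
  define \<tau> where "\<tau> = sqrt (s / 2) * sqrt (\<Sum>k<M. (cmod (y k))\<^sup>2)"
  have t: "\<tau> > 0" unfolding \<tau>_def using s L by auto
  have tL: "sqrt (s / 2) * sqrt L \<le> \<tau>" unfolding \<tau>_def using s L by (intro mult_left_mono) auto
  have D: "distributed ?Om lborel (\<lambda>\<omega>. Re (cinner M y (col \<omega> i))) (normal_density 0 \<tau>)"
    unfolding \<tau>_def by (rule Om_sum[OF i K])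
  have "emeasure ?Om {\<omega>\<in>space ?Om. cmod (cinner M y (col \<omega> i)) < u}
      \<le> emeasure ?Om {\<omega>\<in>space ?Om. \<bar>Re (cinner M y (col \<omega> i))\<bar> < u}"
  proof (rule emeasure_mono)
    show "{\<omega>\<in>space ?Om. cmod (cinner M y (col \<omega> i)) < u} \<subseteq> {\<omega>\<in>space ?Om. \<bar>Re (cinner M y (col \<omega> i))\<bar> < u}"
      using abs_Re_le_cmod by (auto intro: le_less_trans)
    show "{\<omega>\<in>space ?Om. \<bar>Re (cinner M y (col \<omega> i))\<bar> < u} \<in> sets ?Om"
      using Om_cinner_meas[OF i, of y] by measurable
  qed
  also have "\<dots> \<le> ennreal (2 * u / (\<tau> * sqrt (2 * pi)))"
    by (rule small_ball_normal[OF D t u])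
  also have "\<dots> \<le> ennreal (2 * u / (sqrt (s / 2) * sqrt L * sqrt (2 * pi)))"
    using tL u s L t by (intro ennreal_leI divide_left_mono mult_right_mono mult_pos_pos) auto
  finally show ?thesis
    by (rule measure_le_from_emeasure) (use u s L in auto)
qed

lemma Om_entry:
  assumes j: "j \<in> I" and T: "T > 0"
  shows "measure (PiM I (\<lambda>_. CN s)) {\<omega>\<in>space (PiM I (\<lambda>_. CN s)). cmod (\<omega> j) \<ge> T} \<le> 4 * s / T\<^sup>2"
proof -
  let ?Om = "PiM I (\<lambda>_. CN s)"
  have D1: "distributed ?Om lborel (\<lambda>\<omega>. Re (1 * cnj (\<omega> j))) (normal_density 0 (cmod 1 * sqrt (s / 2)))"
    by (rule Om_lin_entry[OF j]) simp
  have D2: "distributed ?Om lborel (\<lambda>\<omega>. Re (\<i> * cnj (\<omega> j))) (normal_density 0 (cmod \<i> * sqrt (s / 2)))"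
    by (rule Om_lin_entry[OF j]) simp
  have T2: "T / 2 > 0" using T by simp
  have sub: "{\<omega>\<in>space ?Om. cmod (\<omega> j) \<ge> T} \<subseteq>
      {\<omega>\<in>space ?Om. \<bar>Re (1 * cnj (\<omega> j))\<bar> \<ge> T / 2} \<union> {\<omega>\<in>space ?Om. \<bar>Re (\<i> * cnj (\<omega> j))\<bar> \<ge> T / 2}"
  proof safe
    fix \<omega> assume "\<omega> \<in> space ?Om" "T \<le> cmod (\<omega> j)" "\<not> T / 2 \<le> \<bar>Re (\<i> * cnj (\<omega> j))\<bar>"
    then have "T \<le> \<bar>Re (\<omega> j)\<bar> + \<bar>Im (\<omega> j)\<bar>" "\<bar>Im (\<omega> j)\<bar> < T / 2"
      using cmod_le[of "\<omega> j"] by auto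
    then show "T / 2 \<le> \<bar>Re (1 * cnj (\<omega> j))\<bar>" by simp
  qed
  have g1: "(\<lambda>\<omega>. \<bar>Re (1 * cnj (\<omega> j))\<bar>) \<in> borel_measurable ?Om"
    by (rule Om_comp_meas[OF j]) simp
  have g2: "(\<lambda>\<omega>. \<bar>Re (\<i> * cnj (\<omega> j))\<bar>) \<in> borel_measurable ?Om"
    by (rule Om_comp_meas[OF j]) simp
  have m1: "{\<omega>\<in>space ?Om. \<bar>Re (1 * cnj (\<omega> j))\<bar> \<ge> T / 2} \<in> sets ?Om"
    using g1 by measurable
  have m2: "{\<omega>\<in>space ?Om. \<bar>Re (\<i> * cnj (\<omega> j))\<bar> \<ge> T / 2} \<in> sets ?Om"
    using g2 by measurable
  have e1: "measure ?Om {\<omega>\<in>space ?Om. \<bar>Re (1 * cnj (\<omega> j))\<bar> \<ge> T / 2} \<le> (sqrt (s / 2))\<^sup>2 / (T / 2)\<^sup>2"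
    using measure_le_from_emeasure[OF tail_normal[OF D1 _ T2]] s by simp
  have e2: "measure ?Om {\<omega>\<in>space ?Om. \<bar>Re (\<i> * cnj (\<omega> j))\<bar> \<ge> T / 2} \<le> (sqrt (s / 2))\<^sup>2 / (T / 2)\<^sup>2"
    using measure_le_from_emeasure[OF tail_normal[OF D2 _ T2]] s by simp
  have "measure ?Om {\<omega>\<in>space ?Om. cmod (\<omega> j) \<ge> T} \<le> measure ?Om ({\<omega>\<in>space ?Om. \<bar>Re (1 * cnj (\<omega> j))\<bar> \<ge> T / 2} \<union> {\<omega>\<in>space ?Om. \<bar>Re (\<i> * cnj (\<omega> j))\<bar> \<ge> T / 2})"
    using sub m1 m2 by (intro P.finite_measure_mono) auto
  also have "\<dots> \<le> measure ?Om {\<omega>\<in>space ?Om. \<bar>Re (1 * cnj (\<omega> j))\<bar> \<ge> T / 2} + measure ?Om {\<omega>\<in>space ?Om. \<bar>Re (\<i> * cnj (\<omega> j))\<bar> \<ge> T / 2}"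
    using m1 m2 by (rule measure_Un_le)
  also have "\<dots> \<le> 2 * ((sqrt (s / 2))\<^sup>2 / (T / 2)\<^sup>2)" using e1 e2 by simp
  also have "\<dots> = 4 * s / T\<^sup>2" using s by (simp add: power_divide)
  finally show ?thesis .
qed

lemma Om_bad_meas:
  assumes i: "{..<M} \<times> {i} \<subseteq> I"
  shows "{\<omega>\<in>space (PiM I (\<lambda>_. CN s)). bad M y T u \<omega> i} \<in> sets (PiM I (\<lambda>_. CN s))"
proof -
  have c: "(\<lambda>\<omega>. cinner M y (col \<omega> i)) \<in> borel_measurable (PiM I (\<lambda>_. CN s))"
    by (rule Om_cinner_meas[OF i])
  have e: "(\<lambda>\<omega>. cmod (\<omega> (k, i))) \<in> borel_measurable (PiM I (\<lambda>_. CN s))" if "k < M" for k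
    using that i by (intro Om_comp_meas) auto
  have "{\<omega>\<in>space (PiM I (\<lambda>_. CN s)). bad M y T u \<omega> i} =
     (\<Union>k<M. {\<omega>\<in>space (PiM I (\<lambda>_. CN s)). cmod (\<omega> (k, i)) \<ge> T}) \<union> {\<omega>\<in>space (PiM I (\<lambda>_. CN s)). cmod (cinner M y (col \<omega> i)) < u}"
    unfolding bad_def by auto
  also have "\<dots> \<in> sets (PiM I (\<lambda>_. CN s))"
    using c e by measurable
  finally show ?thesis .
qed

lemma Om_bad_prob:
  assumes i: "{..<M} \<times> {i} \<subseteq> I" and L: "L > 0" "(\<Sum>k<M. (cmod (y k))\<^sup>2) \<ge> L" and u: "u \<ge> 0" and T: "T > 0"
  shows "measure (PiM I (\<lambda>_. CN s)) {\<omega>\<in>space (PiM I (\<lambda>_. CN s)). bad M y T u \<omega> i}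
           \<le> 2 * u / (sqrt (s / 2) * sqrt L * sqrt (2 * pi)) + M * (4 * s / T\<^sup>2)"
proof -
  let ?Om = "PiM I (\<lambda>_. CN s)"
  have c: "(\<lambda>\<omega>. cinner M y (col \<omega> i)) \<in> borel_measurable ?Om"
    by (rule Om_cinner_meas[OF i])
  have e: "(\<lambda>\<omega>. cmod (\<omega> (k, i))) \<in> borel_measurable ?Om" if "k < M" for k
    using that i by (intro Om_comp_meas) auto
  have s1: "{\<omega>\<in>space ?Om. cmod (cinner M y (col \<omega> i)) < u} \<in> sets ?Om" using c by measurable
  have s2: "{\<omega>\<in>space ?Om. cmod (\<omega> (k, i)) \<ge> T} \<in> sets ?Om" if "k < M" for k using e[OF that] by measurable
  have "{\<omega>\<in>space ?Om. bad M y T u \<omega> i} =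
     (\<Union>k<M. {\<omega>\<in>space ?Om. cmod (\<omega> (k, i)) \<ge> T}) \<union> {\<omega>\<in>space ?Om. cmod (cinner M y (col \<omega> i)) < u}"
    unfolding bad_def by auto
  then have "measure ?Om {\<omega>\<in>space ?Om. bad M y T u \<omega> i} \<le>
     measure ?Om (\<Union>k<M. {\<omega>\<in>space ?Om. cmod (\<omega> (k, i)) \<ge> T}) + measure ?Om {\<omega>\<in>space ?Om. cmod (cinner M y (col \<omega> i)) < u}"
    using s1 s2 by (auto intro!: measure_Un_le)
  also have "\<dots> \<le> (\<Sum>k<M. measure ?Om {\<omega>\<in>space ?Om. cmod (\<omega> (k, i)) \<ge> T}) + 2 * u / (sqrt (s / 2) * sqrt L * sqrt (2 * pi))"
    using s2 by (intro add_mono measure_UNION_le Om_small[OF i L u]) auto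
  also have "(\<Sum>k<M. measure ?Om {\<omega>\<in>space ?Om. cmod (\<omega> (k, i)) \<ge> T}) \<le> (\<Sum>k<M. 4 * s / T\<^sup>2)"
    using i by (intro sum_mono Om_entry T) auto
  finally show ?thesis by simp
qed

end

lemma fpps: "s > 0 \<Longrightarrow> finite I \<Longrightarrow> finite_product_prob_space (\<lambda>_. CN s) I"
proof -
  assume s: "s > 0" and fin: "finite I"
  have "prob_space (CN s)" using s by (rule prob_CN)
  then interpret CN: prob_space "CN s" .
  show "finite_product_prob_space (\<lambda>_. CN s) I"
    by unfold_locales (auto simp: fin intro: CN.prob_space_axioms)
qed

lemma Om_count:
  assumes s: "s > 0" and I: "I = {..<M} \<times> {..<n}" and M: "M > 0" "n > 0"
    and L: "L > 0" "(\<Sum>k<M. (cmod (y k))\<^sup>2) \<ge> L" and u: "u \<ge> 0" and T: "T > 0" and K: "K \<ge> 1"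
  shows "measure (PiM I (\<lambda>_. CN s)) {\<omega>\<in>space (PiM I (\<lambda>_. CN s)). K \<le> card {i. i < n \<and> bad M y T u \<omega> i}}
           \<le> 2 ^ n * (2 * u / (sqrt (s / 2) * sqrt L * sqrt (2 * pi)) + M * (4 * s / T\<^sup>2)) ^ K"
proof -
  have fin: "finite I" using I by simp
  interpret P: finite_product_prob_space "\<lambda>_. CN s" I using fpps[OF s fin] .
  let ?Om = "PiM I (\<lambda>_. CN s)"
  define Kc where "Kc i = {..<M} \<times> {i}" for i :: nat
  define X where "X i \<omega> = restrict \<omega> (Kc i)" for i and \<omega> :: "nat \<times> nat \<Rightarrow> complex"
  define N where "N i = PiM (Kc i) (\<lambda>_. CN s)" for i
  define B where "B i = {f\<in>space (N i). bad M y T u f i}" for i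
  let ?r = "2 * u / (sqrt (s / 2) * sqrt L * sqrt (2 * pi)) + M * (4 * s / T\<^sup>2)"
  have Ine: "I \<noteq> {}" using I M by auto
  have ind0: "prob_space.indep_vars ?Om (\<lambda>_. CN s) (\<lambda>k \<omega>. \<omega> (id k)) I"
    by (rule Om_indep[OF s fin]) (use Ine in auto)
  have ind: "prob_space.indep_vars ?Om N X {..<n}"
    using P.indep_vars_restrict[OF ind0[unfolded id_def], of "{..<n}" Kc]
    unfolding N_def X_def by (auto simp: Kc_def I disjoint_family_on_def)
  have Kcf: "finite (Kc i)" for i by (simp add: Kc_def)
  have B: "B i \<in> sets (N i)" for i
    unfolding B_def N_def
    by (rule Om_bad_meas[of s "Kc i"]) (use s Kcf in \<open>auto simp: Kc_def\<close>)
  have pre: "X i -` B i \<inter> space ?Om = {\<omega>\<in>space ?Om. bad M y T u \<omega> i}" if "i < n" for i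
  proof -
    have eq: "bad M y T u (X i \<omega>) i = bad M y T u \<omega> i" for \<omega>
    proof -
      have "cinner M y (col (X i \<omega>) i) = cinner M y (col \<omega> i)"
        unfolding cinner_def col_def X_def Kc_def by (intro sum.cong) auto
      moreover have "(\<exists>k<M. cmod (X i \<omega> (k, i)) \<ge> T) = (\<exists>k<M. cmod (\<omega> (k, i)) \<ge> T)"
        unfolding X_def Kc_def by auto
      ultimately show ?thesis unfolding bad_def by simp
    qed
    have sp: "X i \<omega> \<in> space (N i)" if "\<omega> \<in> space ?Om" for \<omega>
      using that \<open>i < n\<close> unfolding X_def N_def Kc_def I by (auto simp: space_PiM)
    show ?thesis unfolding B_def using eq sp by auto
  qed
  have "measure ?Om {\<omega>\<in>space ?Om. K \<le> card {i. i < n \<and> X i \<omega> \<in> B i}} \<le> 2 ^ n * ?r ^ K"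
  proof (rule P.count_bound[OF ind B _ K])
    fix i assume i: "i < n"
    show "measure ?Om (X i -` B i \<inter> space ?Om) \<le> ?r"
      unfolding pre[OF i] by (rule Om_bad_prob[OF s fin _ L u T]) (use i I in auto)
  next
    show "0 \<le> ?r" using u s T L by (intro add_nonneg_nonneg) auto
  qed
  moreover have "{\<omega>\<in>space ?Om. K \<le> card {i. i < n \<and> X i \<omega> \<in> B i}} = {\<omega>\<in>space ?Om. K \<le> card {i. i < n \<and> bad M y T u \<omega> i}}"
  proof -
    have "{i. i < n \<and> X i \<omega> \<in> B i} = {i. i < n \<and> bad M y T u \<omega> i}" if "\<omega> \<in> space ?Om" for \<omega>
      using pre that by blast
    then show ?thesis by auto
  qed
  ultimately show ?thesis by simp
qed

lemma prune_invariant: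
  assumes "(prune_step E f ^^ m) V J" and e: "e \<in> E" "e \<subseteq> J"
    and E2: "\<forall>a\<in>E. a \<noteq> {}"
  shows "J \<subseteq> V \<and> (\<exists>S. S \<subseteq> E \<and> finite S \<and> card S = m \<and> (\<forall>a\<in>S. f a \<le> f e \<and> a \<inter> J = {} \<and> a \<subseteq> V)
          \<and> (\<forall>a\<in>S. \<forall>b\<in>S. a \<noteq> b \<longrightarrow> a \<inter> b = {}))"
  using assms(1) e
proof (induction m arbitrary: J)
  case 0
  then show ?case by auto
next
  case (Suc m)
  from Suc.prems(1) obtain H where H: "(prune_step E f ^^ m) V H" "prune_step E f H J"
    by (auto simp: relpowp_Suc_right)
  have JH: "J \<subseteq> H" using H(2) unfolding prune_step_def by auto
  have eH: "e \<subseteq> H" using Suc.prems(3) JH by (rule order.trans)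
  from Suc.IH[OF H(1) Suc.prems(2) eH] obtain S where HV: "H \<subseteq> V" and
    S: "S \<subseteq> E" "finite S" "card S = m" "\<forall>a\<in>S. f a \<le> f e \<and> a \<inter> H = {} \<and> a \<subseteq> V"
       "\<forall>a\<in>S. \<forall>b\<in>S. a \<noteq> b \<longrightarrow> a \<inter> b = {}"
    using Suc.IH[OF H(1) Suc.prems(2) eH] by (elim conjE exE) (rule that, assumption+)
  from H(2) eH Suc.prems(2) obtain e' where e': "e' \<in> E" "e' \<subseteq> H" "\<forall>a\<in>E. a \<subseteq> H \<longrightarrow> f e' \<le> f a" "J = H - e'"
  proof -
    have "\<not> (\<forall>a\<in>E. \<not> a \<subseteq> H)" using eH Suc.prems(2) by blast
    then have "\<exists>e'\<in>E. e' \<subseteq> H \<and> (\<forall>a\<in>E. a \<subseteq> H \<longrightarrow> f e' \<le> f a) \<and> J = H - e'"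
      using H(2) unfolding prune_step_def by blast
    then show ?thesis using that by blast
  qed
  have ne: "e' \<noteq> {}" using E2 e' by auto
  have notin: "e' \<notin> S" using S(4) e'(2) ne by blast
  show ?case
  proof (intro conjI exI[of _ "insert e' S"])
    show "J \<subseteq> V" using JH HV by auto
    show "insert e' S \<subseteq> E" using S e' by auto
    show "finite (insert e' S)" using S by auto
    show "card (insert e' S) = Suc m" using S notin by simp
    show "\<forall>a\<in>insert e' S. f a \<le> f e \<and> a \<inter> J = {} \<and> a \<subseteq> V"
    proof
      fix a assume a: "a \<in> insert e' S"
      show "f a \<le> f e \<and> a \<inter> J = {} \<and> a \<subseteq> V"
      proof (cases "a = e'")
        case True
        then show ?thesis using e'(2,3,4) eH Suc.prems(2) HV by blast
      next
        case False
        then have "a \<in> S" using a by simp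
        then show ?thesis using S(4) JH by blast
      qed
    qed
    show "\<forall>a\<in>insert e' S. \<forall>b\<in>insert e' S. a \<noteq> b \<longrightarrow> a \<inter> b = {}"
    proof (intro ballI impI)
      fix a b assume a: "a \<in> insert e' S" and b: "b \<in> insert e' S" and ab: "a \<noteq> b"
      show "a \<inter> b = {}"
      proof (cases "a = e'")
        case True
        then have "b \<in> S" using b ab by simp
        then show ?thesis using S(4) e'(2) True by blast
      next
        case False
        then have aS: "a \<in> S" using a by simp
        show ?thesis
        proof (cases "b = e'")
          case True then show ?thesis using S(4) e'(2) aS by blast
        next
          case False then have "b \<in> S" using b by simp
          then show ?thesis using S(5) aS ab by blast
        qed
      qed
    qed
  qed
qed


lemma pun_lower:
  fixes M n :: nat and E :: "nat set set" and \<Phi> :: "nat \<times> nat \<Rightarrow> complex" and \<epsilon> :: "nat set \<Rightarrow> complex"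
  assumes M: "M \<ge> 1" and \<delta>: "\<delta> > 0" and E: "E \<subseteq> {e. e \<subseteq> {..<n} \<and> card e = 2}"
    and noise: "noise_norm E \<epsilon> < (\<delta> / 2) / sqrt M"
    and H: "\<And>x. (\<Sum>k<M. (cmod (x k))\<^sup>2) = 1 \<Longrightarrow>
              card {i. i < n \<and> (cmod (cinner M x (col \<Phi> i)))\<^sup>2 < \<delta> / M} + M \<le> nat \<lfloor>(1 - \<alpha>) * real n\<rfloor>"
  shows "PUN M n E \<Phi> \<alpha> \<epsilon> \<ge> ereal ((\<delta> / 2) / M)"
proof -
  define c where "c = (\<delta> / 2) / M"
  have c: "c > 0" using \<delta> M by (simp add: c_def)
  have finE: "finite E" using E by (rule finite_subset) (auto intro: finite_subset[of _ "Pow {..<n}"])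
  have E2: "\<forall>a\<in>E. a \<noteq> {}" using E by auto
  show ?thesis
    unfolding PUN_def c_def[symmetric]
  proof (intro INF_greatest)
    fix x :: "nat \<Rightarrow> complex" and J e
    assume x: "x \<in> {x. (\<Sum>k<M. (cmod (x k))\<^sup>2) = 1}"
    define f where "f = (\<lambda>e. cmod (fval M \<Phi> x \<epsilon> e))"
    define a where "a i = cinner M x (col \<Phi> i)" for i
    define Sm where "Sm = {i. i < n \<and> (cmod (a i))\<^sup>2 < \<delta> / M}"
    define m where "m = nat \<lfloor>(1 - \<alpha>) * real (card {..<n})\<rfloor>"
    have Hx: "card Sm + M \<le> m" using H[of x] x unfolding Sm_def a_def m_def by simp
    assume "J \<in> pruned_sets {..<n} E (\<lambda>e. cmod (fval M \<Phi> x \<epsilon> e)) \<alpha>"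
    then have J: "(prune_step E f ^^ m) {..<n} J" unfolding pruned_sets_def f_def m_def by simp
    assume "e \<in> {e \<in> E. e \<subseteq> J}"
    then have e: "e \<in> E" "e \<subseteq> J" by auto
    show "ereal c \<le> ereal (cmod (fval M \<Phi> x \<epsilon> e))"
    proof (rule ccontr)
      assume "\<not> ?thesis"
      then have fe: "f e < c" unfolding f_def by simp
      obtain S where S: "S \<subseteq> E" "finite S" "card S = m" "\<forall>a\<in>S. f a \<le> f e \<and> a \<inter> J = {} \<and> a \<subseteq> {..<n}"
          "\<forall>a\<in>S. \<forall>b\<in>S. a \<noteq> b \<longrightarrow> a \<inter> b = {}"
        using prune_invariant[OF J e E2] by (elim conjE exE) (rule that, assumption+)
      define S' where "S' = insert e S"
      have eS: "e \<notin> S"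
      proof
        assume "e \<in> S"
        then have "e \<inter> J = {}" using S(4) by simp
        moreover have "e \<noteq> {}" using E2 e by simp
        ultimately show False using e(2) by blast
      qed
      have cS': "card S' = Suc m" using S eS unfolding S'_def by simp
      have finS': "finite S'" using S unfolding S'_def by simp
      have S'E: "S' \<subseteq> E" using S e unfolding S'_def by auto
      have fS': "\<forall>b\<in>S'. f b < c" using S(4) fe unfolding S'_def by (auto intro: le_less_trans)
      have disj: "\<forall>b\<in>S'. \<forall>d\<in>S'. b \<noteq> d \<longrightarrow> b \<inter> d = {}"
      proof (intro ballI impI)
        fix b d assume b: "b \<in> S'" and d: "d \<in> S'" and bd: "b \<noteq> d"
        have eJ: "\<And>b. b \<in> S \<Longrightarrow> b \<inter> e = {}" using S(4) e(2) by blast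
        show "b \<inter> d = {}"
        proof (cases "b = e")
          case True then have "d \<in> S" using d bd unfolding S'_def by simp
          then show ?thesis using eJ True by blast
        next
          case False then have bS: "b \<in> S" using b unfolding S'_def by simp
          show ?thesis
          proof (cases "d = e")
            case True then show ?thesis using eJ[OF bS] by simp
          next
            case False then have "d \<in> S" using d unfolding S'_def by simp
            then show ?thesis using S(5) bS bd by simp
          qed
        qed
      qed
      define A1 where "A1 = {b\<in>S'. b \<inter> Sm \<noteq> {}}"
      define A2 where "A2 = {b\<in>S'. b \<inter> Sm = {}}"
      have split: "card S' = card A1 + card A2"
      proof -
        have "S' = A1 \<union> A2" "A1 \<inter> A2 = {}" unfolding A1_def A2_def by auto
        moreover have "finite A1" "finite A2" using finS' unfolding A1_def A2_def by auto
        ultimately show ?thesis using card_Un_disjoint[of A1 A2] by simp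
      qed
      have A1: "card A1 \<le> card Sm"
      proof -
        define g where "g b = (SOME v. v \<in> b \<and> v \<in> Sm)" for b :: "nat set"
        have g: "g b \<in> b \<and> g b \<in> Sm" if "b \<in> A1" for b
        proof -
          have "\<exists>v. v \<in> b \<and> v \<in> Sm" using that unfolding A1_def by auto
          from someI_ex[OF this] show ?thesis unfolding g_def .
        qed
        have "inj_on g A1"
        proof
          fix b d assume "b \<in> A1" "d \<in> A1" "g b = g d"
          then have "g b \<in> b \<inter> d" using g[of b] g[of d] by simp
          moreover have "b \<in> S'" "d \<in> S'" using \<open>b \<in> A1\<close> \<open>d \<in> A1\<close> unfolding A1_def by auto
          ultimately show "b = d" using disj by blast
        qed
        moreover have "g ` A1 \<subseteq> Sm" using g by auto
        moreover have "finite Sm" unfolding Sm_def by simp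
        ultimately show ?thesis by (rule card_inj_on_le)
      qed
      have big: "cmod (\<epsilon> b) > c" if b: "b \<in> A2" for b
      proof -
        have bE: "b \<in> E" and bS: "b \<inter> Sm = {}" and fb: "f b < c"
          using b S'E fS' unfolding A2_def by auto
        have bn: "b \<subseteq> {..<n}" "card b = 2" using bE E by auto
        then have fin: "finite b" "b \<noteq> {}" by (auto intro: finite_subset)
        have mn: "Min b \<in> b" "Max b \<in> b" using fin by auto
        have ge: "(cmod (a i))\<^sup>2 \<ge> \<delta> / M" if "i \<in> b" for i
          using that bS bn unfolding Sm_def by auto
        have ge': "cmod (a i) \<ge> sqrt (\<delta> / M)" if "i \<in> b" for i
          using ge[OF that] real_sqrt_le_mono[of "\<delta> / M" "(cmod (a i))\<^sup>2"] by simp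
        have "sqrt (\<delta> / M) * sqrt (\<delta> / M) \<le> cmod (a (Min b)) * cmod (a (Max b))"
          using ge'[OF mn(1)] ge'[OF mn(2)] \<delta> by (intro mult_mono) auto
        also have "\<dots> = cmod (cnj (a (Min b)) * a (Max b))" by (simp add: norm_mult)
        also have "\<dots> \<le> f b + cmod (\<epsilon> b)"
          unfolding f_def fval_def a_def using norm_triangle_ineq4[of "cnj (cinner M x (col \<Phi> (Min b))) * cinner M x (col \<Phi> (Max b)) + \<epsilon> b" "\<epsilon> b"]
          by simp
        finally have "\<delta> / M \<le> f b + cmod (\<epsilon> b)" using \<delta> by simp
        moreover have "\<delta> / M = 2 * c" unfolding c_def by simp
        ultimately show ?thesis using fb by simp
      qed
      have A2: "card A2 < M"
      proof -
        have "real (card A2) * c\<^sup>2 = (\<Sum>b\<in>A2. c\<^sup>2)" by simp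
        also have "\<dots> \<le> (\<Sum>b\<in>A2. (cmod (\<epsilon> b))\<^sup>2)"
          using big c by (intro sum_mono power_mono) (auto intro: less_imp_le)
        also have "\<dots> \<le> (\<Sum>b\<in>E. (cmod (\<epsilon> b))\<^sup>2)"
          using S'E finE unfolding A2_def by (intro sum_mono2) auto
        also have "\<dots> = (noise_norm E \<epsilon>)\<^sup>2"
          unfolding noise_norm_def by (simp add: sum_nonneg)
        also have "\<dots> < ((\<delta> / 2) / sqrt M)\<^sup>2"
          using noise by (intro power_strict_mono) (auto simp: noise_norm_def sum_nonneg)
        also have "\<dots> = real M * c\<^sup>2"
          using M unfolding c_def by (simp add: power_divide power2_eq_square)
        finally have "real (card A2) < real M" using c by simp
        then show ?thesis by simp
      qed
      show False using split A1 A2 Hx cS' by linarith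
    qed
  qed
qed


definition gridR :: "real \<Rightarrow> int" where "gridR h = \<lceil>1 / h\<rceil> + 1"

definition grid :: "real \<Rightarrow> complex set" where
  "grid h = (\<lambda>(a, b). Complex (h * of_int a) (h * of_int b)) ` ({- gridR h..gridR h} \<times> {- gridR h..gridR h})"

definition Net :: "nat \<Rightarrow> real \<Rightarrow> (nat \<Rightarrow> complex) set" where
  "Net M h = (\<lambda>f k. if k < M then f k else 0) ` (PiE {..<M} (\<lambda>_. grid h))"

lemma finite_grid: "finite (grid h)" unfolding grid_def by simp

lemma card_grid: "card (grid h) \<le> nat (2 * gridR h + 1) ^ 2"
proof -
  have "card (grid h) \<le> card ({- gridR h..gridR h} \<times> {- gridR h..gridR h})"
    unfolding grid_def by (rule card_image_le) simp
  also have "\<dots> = nat (2 * gridR h + 1) ^ 2"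
    by (simp add: card_cartesian_product power2_eq_square)
  finally show ?thesis .
qed

lemma finite_Net: "finite (Net M h)"
  unfolding Net_def by (intro finite_imageI finite_PiE) (auto simp: finite_grid)

lemma card_Net: "card (Net M h) \<le> nat (2 * gridR h + 1) ^ (2 * M)"
proof -
  have "card (Net M h) \<le> card (PiE {..<M} (\<lambda>_. grid h))"
    unfolding Net_def by (rule card_image_le, intro finite_PiE) (auto simp: finite_grid)
  also have "\<dots> = card (grid h) ^ M" by (simp add: card_PiE)
  also have "\<dots> \<le> (nat (2 * gridR h + 1) ^ 2) ^ M" by (intro power_mono card_grid) simp
  finally show ?thesis by (simp add: power_mult)
qed

lemma floor_grid:
  assumes h: "h > 0" and r: "\<bar>r\<bar> \<le> 1"
  shows "\<lfloor>r / h\<rfloor> \<in> {- gridR h..gridR h}" and "0 \<le> r - h * \<lfloor>r / h\<rfloor>" "r - h * \<lfloor>r / h\<rfloor> < h"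
proof -
  have a: "\<bar>r / h\<bar> \<le> 1 / h" using r h by (simp add: abs_divide divide_right_mono)
  have "1 / h \<le> of_int \<lceil>1 / h\<rceil>" by (rule le_of_int_ceiling)
  then have "\<bar>r / h\<bar> \<le> of_int \<lceil>1 / h\<rceil>" using a by linarith
  moreover have "of_int \<lfloor>r / h\<rfloor> \<le> r / h" "r / h - 1 < of_int \<lfloor>r / h\<rfloor>"
    using of_int_floor_le[of "r / h"] real_of_int_floor_gt_diff_one[of "r / h"] by auto
  ultimately have "- of_int \<lceil>1 / h\<rceil> - 1 < (of_int \<lfloor>r / h\<rfloor> :: real)" "(of_int \<lfloor>r / h\<rfloor> :: real) \<le> of_int \<lceil>1 / h\<rceil>"
    by linarith+
  then show "\<lfloor>r / h\<rfloor> \<in> {- gridR h..gridR h}" unfolding gridR_def by simp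
  have f1: "of_int \<lfloor>r / h\<rfloor> \<le> r / h" by (rule of_int_floor_le)
  have f2: "r / h < of_int \<lfloor>r / h\<rfloor> + 1" by linarith
  have "h * of_int \<lfloor>r / h\<rfloor> \<le> h * (r / h)" using f1 h by (intro mult_left_mono) auto
  moreover have "h * (r / h) < h * (of_int \<lfloor>r / h\<rfloor> + 1)" using f2 h by (intro mult_strict_left_mono) auto
  ultimately have "h * of_int \<lfloor>r / h\<rfloor> \<le> r" "r < h * of_int \<lfloor>r / h\<rfloor> + h"
    using h by (simp_all add: algebra_simps)
  then show "0 \<le> r - h * \<lfloor>r / h\<rfloor>" "r - h * \<lfloor>r / h\<rfloor> < h" by simp_all
qed

lemma net_approx:
  assumes h: "h > 0" and x: "\<And>k. k < M \<Longrightarrow> cmod (x k) \<le> 1"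
  shows "\<exists>y\<in>Net M h. \<forall>k<M. cmod (x k - y k) < 2 * h"
proof -
  define r where "r k = Complex (h * of_int \<lfloor>Re (x k) / h\<rfloor>) (h * of_int \<lfloor>Im (x k) / h\<rfloor>)" for k
  define y where "y k = (if k < M then r k else 0)" for k
  have rg: "r k \<in> grid h" if "k < M" for k
  proof -
    have "\<bar>Re (x k)\<bar> \<le> 1" "\<bar>Im (x k)\<bar> \<le> 1"
      using x[OF that] abs_Re_le_cmod abs_Im_le_cmod order.trans by blast+
    then show ?thesis unfolding r_def grid_def using floor_grid(1)[OF h] by force
  qed
  have "y \<in> Net M h"
    unfolding Net_def y_def by (rule image_eqI[of _ _ "restrict r {..<M}"]) (auto simp: rg)
  moreover have "cmod (x k - y k) < 2 * h" if k: "k < M" for k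
  proof -
    have "\<bar>Re (x k)\<bar> \<le> 1" "\<bar>Im (x k)\<bar> \<le> 1"
      using x[OF k] abs_Re_le_cmod abs_Im_le_cmod order.trans by blast+
    then have b: "\<bar>Re (x k - y k)\<bar> < h" "\<bar>Im (x k - y k)\<bar> < h"
      using floor_grid(2,3)[OF h] k unfolding y_def r_def by auto
    have "cmod (x k - y k) \<le> \<bar>Re (x k - y k)\<bar> + \<bar>Im (x k - y k)\<bar>" by (rule cmod_le)
    then show ?thesis using b by simp
  qed
  ultimately show ?thesis by blast
qed


lemma unit_coord_le:
  fixes M k :: nat and x :: "nat \<Rightarrow> complex"
  assumes "(\<Sum>k<M. (cmod (x k))\<^sup>2) = 1" "k < M"
  shows "cmod (x k) \<le> 1"
proof -
  have "(cmod (x k))\<^sup>2 \<le> (\<Sum>k<M. (cmod (x k))\<^sup>2)"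
    using assms(2) by (intro member_le_sum) auto
  then have "(cmod (x k))\<^sup>2 \<le> 1\<^sup>2" using assms(1) by simp
  then show ?thesis by (rule power2_le_imp_le) simp
qed

lemma net_norm:
  fixes M :: nat and x y :: "nat \<Rightarrow> complex"
  assumes x: "(\<Sum>k<M. (cmod (x k))\<^sup>2) = 1" and d: "\<And>k. k < M \<Longrightarrow> cmod (x k - y k) < 2 * h" and h: "h > 0"
  shows "(\<Sum>k<M. (cmod (y k))\<^sup>2) \<ge> 1 - 4 * h * M"
proof -
  have k: "(cmod (y k))\<^sup>2 \<ge> (cmod (x k))\<^sup>2 - 4 * h" if k: "k < M" for k
  proof -
    have x1: "cmod (x k) \<le> 1" by (rule unit_coord_le[OF x k])
    have t: "cmod (x k) \<le> cmod (y k) + cmod (x k - y k)" using norm_triangle_ineq4[of "x k" "y k"]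
      by (metis add.commute diff_add_cancel norm_triangle_ineq)
    show ?thesis
    proof (cases "cmod (x k) \<ge> 2 * h")
      case True
      then have a: "0 \<le> cmod (x k) - 2 * h" "cmod (x k) - 2 * h \<le> cmod (y k)" using t d[OF k] by auto
      have "(cmod (x k) - 2 * h)\<^sup>2 \<le> (cmod (y k))\<^sup>2" by (rule power_mono[OF a(2) a(1)])
      moreover have "(cmod (x k))\<^sup>2 - 4 * h \<le> (cmod (x k) - 2 * h)\<^sup>2"
      proof -
        have "(cmod (x k) - 2 * h)\<^sup>2 = (cmod (x k))\<^sup>2 - 4 * h * cmod (x k) + 4 * h\<^sup>2"
          by (simp add: power2_eq_square algebra_simps)
        moreover have "4 * h * cmod (x k) \<le> 4 * h" using x1 h by simp
        ultimately show ?thesis by (smt (verit) zero_le_power2)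
      qed
      ultimately show ?thesis by simp
    next
      case False
      then have "(cmod (x k))\<^sup>2 \<le> 4 * h"
        using x1 h by (smt (verit) mult_left_le_one_le norm_ge_zero power2_eq_square)
      then show ?thesis by (smt (verit) zero_le_power2)
    qed
  qed
  have "(\<Sum>k<M. (cmod (x k))\<^sup>2 - 4 * h) \<le> (\<Sum>k<M. (cmod (y k))\<^sup>2)"
    using k by (intro sum_mono) auto
  moreover have "(\<Sum>k<M. (cmod (x k))\<^sup>2 - 4 * h) = 1 - 4 * h * M"
    using x by (simp add: sum_subtractf)
  ultimately show ?thesis by linarith
qed

lemma cinner_diff_bound:
  fixes M :: nat and x y v :: "nat \<Rightarrow> complex" and h T :: real
  assumes d: "\<And>k. k < M \<Longrightarrow> cmod (x k - y k) < 2 * h" and v: "\<And>k. k < M \<Longrightarrow> cmod (v k) < T"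
  shows "cmod (cinner M x v - cinner M y v) \<le> M * (2 * h * T)"
proof -
  have "cinner M x v - cinner M y v = (\<Sum>k<M. (x k - y k) * cnj (v k))"
    unfolding cinner_def by (simp add: sum_subtractf algebra_simps)
  then have "cmod (cinner M x v - cinner M y v) \<le> (\<Sum>k<M. cmod ((x k - y k) * cnj (v k)))"
    by (simp add: norm_sum)
  also have "\<dots> \<le> (\<Sum>k<M. 2 * h * T)"
  proof (intro sum_mono)
    fix k assume "k \<in> {..<M}"
    then have "cmod (x k - y k) \<le> 2 * h" "cmod (v k) \<le> T" using d v by (auto intro: less_imp_le)
    then show "cmod ((x k - y k) * cnj (v k)) \<le> 2 * h * T"
    proof -
      have "cmod (x k - y k) * cmod (v k) \<le> 2 * h * T"
      proof (rule mult_mono)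
        show "cmod (x k - y k) \<le> 2 * h" "cmod (v k) \<le> T" by fact+
        show "0 \<le> 2 * h" using \<open>cmod (x k - y k) \<le> 2 * h\<close> norm_ge_zero[of "x k - y k"] by linarith
        show "0 \<le> cmod (v k)" by simp
      qed
      then show ?thesis by (simp add: norm_mult)
    qed
  qed
  finally show ?thesis by simp
qed

lemma small_subset:
  fixes M n :: nat and x y :: "nat \<Rightarrow> complex" and h T \<delta> :: real
  assumes d: "\<And>k. k < M \<Longrightarrow> cmod (x k - y k) < 2 * h" and hT: "M * (2 * h * T) \<le> sqrt (\<delta> / M)"
  shows "{i. i < n \<and> (cmod (cinner M x (col \<Phi> i)))\<^sup>2 < \<delta> / M} \<subseteq> {i. i < n \<and> bad M y T (2 * sqrt (\<delta> / M)) \<Phi> i}"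
proof safe
  fix i assume i: "i < n" and sm: "(cmod (cinner M x (col \<Phi> i)))\<^sup>2 < \<delta> / M"
  show "bad M y T (2 * sqrt (\<delta> / M)) \<Phi> i"
  proof (cases "\<exists>k<M. cmod (\<Phi> (k, i)) \<ge> T")
    case True then show ?thesis unfolding bad_def by blast
  next
    case False
    then have v: "\<And>k. k < M \<Longrightarrow> cmod (col \<Phi> i k) < T" by (auto simp: col_def not_le)
    have a: "cmod (cinner M x (col \<Phi> i)) < sqrt (\<delta> / M)"
      using sm real_sqrt_less_mono[of "(cmod (cinner M x (col \<Phi> i)))\<^sup>2" "\<delta> / M"] by simp
    have "cmod (cinner M y (col \<Phi> i)) \<le> cmod (cinner M x (col \<Phi> i)) + cmod (cinner M x (col \<Phi> i) - cinner M y (col \<Phi> i))"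
      by (metis add.commute diff_add_cancel norm_triangle_ineq4 norm_minus_commute order_refl norm_triangle_ineq)
    also have "\<dots> < sqrt (\<delta> / M) + sqrt (\<delta> / M)"
      using a cinner_diff_bound[of M x y h "col \<Phi> i" T, OF d v] hT by linarith
    finally show ?thesis unfolding bad_def by simp
  qed
qed


lemma card_bad_meas:
  assumes s: "s > 0" and I: "I = {..<M} \<times> {..<n}"
  shows "{\<omega>\<in>space (PiM I (\<lambda>_. CN s)). K \<le> card {i. i < n \<and> bad M y T u \<omega> i}} \<in> sets (PiM I (\<lambda>_. CN s))"
proof -
  let ?Om = "PiM I (\<lambda>_. CN s)"
  have fin: "finite I" using I by simp
  define B where "B i = {\<omega>\<in>space ?Om. bad M y T u \<omega> i}" for i
  have B: "B i \<in> sets ?Om" if "i < n" for i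
    unfolding B_def by (rule Om_bad_meas[OF s fin]) (use that I in auto)
  have f: "(\<lambda>\<omega>. \<Sum>i<n. indicator (B i) \<omega> :: real) \<in> borel_measurable ?Om"
    using B by (intro borel_measurable_sum) auto
  have eq: "real (card {i. i < n \<and> bad M y T u \<omega> i}) = (\<Sum>i<n. indicator (B i) \<omega>)" if "\<omega> \<in> space ?Om" for \<omega>
  proof -
    have "(\<Sum>i<n. indicator (B i) \<omega> :: real) = (\<Sum>i<n. if bad M y T u \<omega> i then 1 else 0)"
      using that by (intro sum.cong) (auto simp: B_def indicator_def)
    also have "\<dots> = real (card ({..<n} \<inter> {i. bad M y T u \<omega> i}))"
      by (simp add: sum.If_cases)
    also have "{..<n} \<inter> {i. bad M y T u \<omega> i} = {i. i < n \<and> bad M y T u \<omega> i}" by auto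
    finally show ?thesis by simp
  qed
  have "{\<omega>\<in>space ?Om. K \<le> card {i. i < n \<and> bad M y T u \<omega> i}} = {\<omega>\<in>space ?Om. real K \<le> (\<Sum>i<n. indicator (B i) \<omega>)}"
  proof (intro Collect_cong conj_cong refl)
    fix \<omega> assume "\<omega> \<in> space ?Om"
    then show "(K \<le> card {i. i < n \<and> bad M y T u \<omega> i}) = (real K \<le> (\<Sum>i<n. indicator (B i) \<omega>))"
      unfolding eq[OF \<open>\<omega> \<in> space ?Om\<close>, symmetric] by simp
  qed
  also have "\<dots> \<in> sets ?Om" using f by measurable
  finally show ?thesis .
qed


lemma prob_main:
  fixes M n K :: nat and \<delta> T h \<alpha> :: real
  assumes M: "M \<ge> 1" "n \<ge> 1" and \<delta>: "\<delta> > 0" and T: "T > 0"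
    and h: "h > 0" "4 * h * M \<le> 3 / 4" "M * (2 * h * T) \<le> sqrt (\<delta> / M)"
    and K: "K \<ge> 1" "K + M \<le> nat \<lfloor>(1 - \<alpha>) * real n\<rfloor> + 1"
  shows "\<exists>A\<in>sets (gauss_matrix M n).
     measure (gauss_matrix M n) A \<ge> 1 - card (Net M h) * (2 ^ n *
        (2 * (2 * sqrt (\<delta> / M)) / (sqrt ((1 / M) / 2) * sqrt (1 / 4) * sqrt (2 * pi)) + M * (4 * (1 / M) / T\<^sup>2)) ^ K) \<and>
     (\<forall>\<Phi>\<in>A. \<forall>x. (\<Sum>k<M. (cmod (x k))\<^sup>2) = 1 \<longrightarrow>
        card {i. i < n \<and> (cmod (cinner M x (col \<Phi> i)))\<^sup>2 < \<delta> / M} + M \<le> nat \<lfloor>(1 - \<alpha>) * real n\<rfloor>)"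
proof -
  define s :: real where "s = 1 / M"
  define I where "I = {..<M} \<times> {..<n}"
  define u where "u = 2 * sqrt (\<delta> / M)"
  define r where "r = 2 * u / (sqrt (s / 2) * sqrt (1 / 4) * sqrt (2 * pi)) + M * (4 * s / T\<^sup>2)"
  have s: "s > 0" using M by (simp add: s_def)
  have fin: "finite I" by (simp add: I_def)
  interpret P: finite_product_prob_space "\<lambda>_. CN s" I using fpps[OF s fin] .
  let ?Om = "PiM I (\<lambda>_. CN s)"
  have Om: "gauss_matrix M n = ?Om" by (simp add: gauss_matrix_def s_def I_def)
  define N' where "N' = {y\<in>Net M h. (\<Sum>k<M. (cmod (y k))\<^sup>2) \<ge> 1 / 4}"
  have finN': "finite N'" unfolding N'_def using finite_Net by simp
  have cardN': "card N' \<le> card (Net M h)" unfolding N'_def by (rule card_mono[OF finite_Net]) auto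
  define Bs where "Bs y = {\<omega>\<in>space ?Om. K \<le> card {i. i < n \<and> bad M y T u \<omega> i}}" for y
  define A where "A = space ?Om - (\<Union>y\<in>N'. Bs y)"
  have Bs: "Bs y \<in> sets ?Om" for y unfolding Bs_def by (rule card_bad_meas[OF s I_def])
  have UB: "(\<Union>y\<in>N'. Bs y) \<in> sets ?Om" using finN' Bs by (intro sets.finite_UN) auto
  have Asets: "A \<in> sets ?Om" unfolding A_def using UB by auto
  have pBs: "measure ?Om (Bs y) \<le> 2 ^ n * r ^ K" if "y \<in> N'" for y
    unfolding Bs_def r_def
    by (rule Om_count[OF s I_def _ _ _ _ _ T K(1)]) (use M that \<delta> in \<open>auto simp: N'_def u_def\<close>)
  have "measure ?Om (\<Union>y\<in>N'. Bs y) \<le> (\<Sum>y\<in>N'. measure ?Om (Bs y))"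
    using finN' Bs by (intro measure_UNION_le) auto
  also have "\<dots> \<le> (\<Sum>y\<in>N'. 2 ^ n * r ^ K)" using pBs by (intro sum_mono) auto
  also have "\<dots> = card N' * (2 ^ n * r ^ K)" by simp
  also have "\<dots> \<le> card (Net M h) * (2 ^ n * r ^ K)"
  proof (intro mult_right_mono)
    show "real (card N') \<le> real (card (Net M h))" using cardN' by simp
    have "r \<ge> 0" unfolding r_def u_def using s T \<delta> by (intro add_nonneg_nonneg) auto
    then show "0 \<le> 2 ^ n * r ^ K" by simp
  qed
  finally have mU: "measure ?Om (\<Union>y\<in>N'. Bs y) \<le> card (Net M h) * (2 ^ n * r ^ K)" .
  have mA: "measure ?Om A \<ge> 1 - card (Net M h) * (2 ^ n * r ^ K)"
    unfolding A_def using P.prob_compl[OF UB] mU by simp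
  have good: "card {i. i < n \<and> (cmod (cinner M x (col \<Phi> i)))\<^sup>2 < \<delta> / M} + M \<le> nat \<lfloor>(1 - \<alpha>) * real n\<rfloor>"
    if \<Phi>: "\<Phi> \<in> A" and x: "(\<Sum>k<M. (cmod (x k))\<^sup>2) = 1" for \<Phi> x
  proof -
    obtain y where y: "y \<in> Net M h" "\<forall>k<M. cmod (x k - y k) < 2 * h"
      using net_approx[OF h(1), of M x] unit_coord_le[OF x] by blast
    have "(\<Sum>k<M. (cmod (y k))\<^sup>2) \<ge> 1 - 4 * h * M" by (rule net_norm[OF x _ h(1)]) (use y in auto)
    then have "y \<in> N'" using y h(2) unfolding N'_def by auto
    then have "\<Phi> \<notin> Bs y" using \<Phi> unfolding A_def by auto
    moreover have "\<Phi> \<in> space ?Om" using \<Phi> unfolding A_def by auto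
    ultimately have cb: "card {i. i < n \<and> bad M y T u \<Phi> i} < K" unfolding Bs_def by auto
    have "{i. i < n \<and> (cmod (cinner M x (col \<Phi> i)))\<^sup>2 < \<delta> / M} \<subseteq> {i. i < n \<and> bad M y T u \<Phi> i}"
      unfolding u_def by (rule small_subset) (use y h in auto)
    then have "card {i. i < n \<and> (cmod (cinner M x (col \<Phi> i)))\<^sup>2 < \<delta> / M} \<le> card {i. i < n \<and> bad M y T u \<Phi> i}"
      by (rule card_mono[rotated]) simp
    then show ?thesis using cb K(2) by linarith
  qed
  show ?thesis
    unfolding Om
    by (intro bexI[OF _ Asets] conjI ballI allI impI good)
       (use mA in \<open>simp_all add: r_def u_def s_def\<close>)
qed


lemma r_simp:
  fixes M :: nat and \<delta> T :: real
  assumes M: "M \<ge> 1" and \<delta>: "\<delta> \<ge> 0" and T: "T > 0"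
  shows "2 * (2 * sqrt (\<delta> / M)) / (sqrt ((1 / M) / 2) * sqrt (1 / 4) * sqrt (2 * pi)) + M * (4 * (1 / M) / T\<^sup>2)
         \<le> 8 * sqrt \<delta> + 4 / T\<^sup>2"
proof -
  have m: "sqrt (real M) > 0" using M by simp
  have e1: "sqrt (\<delta> / M) = sqrt \<delta> / sqrt M" by (simp add: real_sqrt_divide)
  have e2: "sqrt ((1 / M) / 2) = 1 / (sqrt M * sqrt 2)" by (simp add: real_sqrt_divide real_sqrt_mult)
  have e3: "sqrt (1 / 4 :: real) = 1 / 2" by (simp add: real_sqrt_divide)
  have e4: "sqrt (2 * pi) = sqrt 2 * sqrt pi" by (simp add: real_sqrt_mult)
  have "2 * (2 * sqrt (\<delta> / M)) / (sqrt ((1 / M) / 2) * sqrt (1 / 4) * sqrt (2 * pi)) = 8 * sqrt \<delta> / sqrt pi"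
    unfolding e1 e2 e3 e4 using m by (simp add: field_simps)
  also have "\<dots> \<le> 8 * sqrt \<delta> / 1"
    using \<delta> pi_gt3 by (intro divide_left_mono) auto
  finally have a: "2 * (2 * sqrt (\<delta> / M)) / (sqrt ((1 / M) / 2) * sqrt (1 / 4) * sqrt (2 * pi)) \<le> 8 * sqrt \<delta>" by simp
  have b: "M * (4 * (1 / M) / T\<^sup>2) = 4 / T\<^sup>2" using M by simp
  show ?thesis using a b by simp
qed

lemma final_exp:
  fixes M n K N :: nat and C c \<eta> r r0 \<beta> :: real
  assumes M: "M \<ge> 1" and C: "C > 0" and \<eta>: "\<eta> > 0" and \<beta>: "\<beta> = 10 / C"
    and n: "real n \<ge> (C / 2) * M * ln M" and lnM: "ln M \<ge> 2 * ln c + 1" and c: "c \<ge> 1"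
    and K: "real K \<ge> \<eta> * n" and r: "0 \<le> r" "r \<le> r0" and r0: "r0 = exp (- (\<beta> + 1) / \<eta>)"
    and N: "real N \<le> (c * M\<^sup>2) ^ (2 * M)"
  shows "real N * (2 ^ n * r ^ K) \<le> exp (- real M)"
proof -
  have Mp: "real M > 0" using M by simp
  have r0p: "r0 > 0" using r0 by simp
  have bp: "\<beta> > 0" using \<beta> C by simp
  have "- (\<beta> + 1) / \<eta> \<le> 0" using bp \<eta> by (intro divide_nonpos_pos) auto
  then have r01: "r0 \<le> 1" using r0 by simp
  have "r ^ K \<le> r0 ^ K" using r by (intro power_mono) auto
  also have "r0 ^ K = exp (real K * ln r0)" using r0p by (simp add: exp_of_nat_mult)
  also have "\<dots> \<le> exp (\<eta> * n * ln r0)"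
  proof -
    have "ln r0 \<le> 0" using r01 r0p by simp
    then show ?thesis using K by (intro exp_mono mult_right_mono_neg) auto
  qed
  also have "\<eta> * n * ln r0 = - (\<beta> + 1) * n" using r0 \<eta> by simp
  finally have rK: "r ^ K \<le> exp (- (\<beta> + 1) * n)" .
  have two: "(2::real) ^ n \<le> exp n"
  proof -
    have l: "real n * ln 2 \<le> real n" using mult_left_mono[of "ln 2" 1 "real n"] ln_2_less_1 by simp
    have "(2::real) ^ n = exp (n * ln 2)" by (simp add: exp_of_nat_mult)
    then show ?thesis using l by simp
  qed
  have "2 ^ n * r ^ K \<le> exp n * exp (- (\<beta> + 1) * n)"
    using two rK r by (intro mult_mono) auto
  also have "\<dots> = exp (n + (- (\<beta> + 1) * n))" by (rule exp_add[symmetric])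
  also have "n + (- (\<beta> + 1) * n) = - \<beta> * n" by (simp add: algebra_simps)
  finally have P: "2 ^ n * r ^ K \<le> exp (- \<beta> * n)" .
  have cM: "c * M\<^sup>2 > 0" using c Mp by simp
  have "(c * M\<^sup>2) ^ (2 * M) = (exp (ln (c * M\<^sup>2))) ^ (2 * M)" using cM by simp
  also have "\<dots> = exp (real (2 * M) * ln (c * M\<^sup>2))" by (rule exp_of_nat_mult[symmetric])
  also have "ln (c * M\<^sup>2) = ln c + 2 * ln M" using c Mp by (simp add: ln_mult ln_realpow)
  finally have NN: "real N \<le> exp (2 * M * (ln c + 2 * ln M))" using N by simp
  have "real N * (2 ^ n * r ^ K) \<le> exp (2 * M * (ln c + 2 * ln M)) * exp (- \<beta> * n)"
    using NN P r(1) by (intro mult_mono) auto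
  also have "\<dots> = exp (2 * M * (ln c + 2 * ln M) - \<beta> * n)" by (simp add: exp_diff exp_minus field_simps)
  also have "\<dots> \<le> exp (- real M)"
  proof (intro exp_mono)
    have "\<beta> * n \<ge> (10 / C) * ((C / 2) * M * ln M)" unfolding \<beta> using n C by (intro mult_left_mono) auto
    also have "(10 / C) * ((C / 2) * M * ln M) = 5 * M * ln M" using C by simp
    finally have bn: "\<beta> * n \<ge> 5 * M * ln M" .
    have "M * (2 * ln c + 1) \<le> M * ln M" using lnM Mp by (intro mult_left_mono) auto
    then show "2 * M * (ln c + 2 * ln M) - \<beta> * n \<le> - real M" using bn by (simp add: algebra_simps)
  qed
  finally show ?thesis .
qed


lemma final_max:
  fixes M :: nat and \<delta> :: real and P :: ereal and \<nu> :: real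
  assumes M: "M \<ge> 1" and \<delta>: "\<delta> > 0"
    and H: "\<nu> < (\<delta> / 2) / sqrt M \<Longrightarrow> P \<ge> ereal ((\<delta> / 2) / M)"
  shows "max (ereal \<nu>) (ereal (sqrt (real M)) * P) \<ge> ereal ((\<delta> / 2) / sqrt (real M))"
proof (cases "\<nu> < (\<delta> / 2) / sqrt M")
  case True
  have "ereal (sqrt (real M)) * ereal ((\<delta> / 2) / M) \<le> ereal (sqrt (real M)) * P"
    by (rule ereal_mult_left_mono[OF H[OF True]]) simp
  moreover have "sqrt (real M) * ((\<delta> / 2) / M) = (\<delta> / 2) / sqrt (real M)"
  proof -
    have "real M = sqrt (real M) * sqrt (real M)" by simp
    moreover have "sqrt (real M) > 0" using M by simp
    ultimately show ?thesis by (metis divide_divide_eq_left nonzero_mult_div_cancel_left times_divide_eq_right less_irrefl)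
  qed
  ultimately have "ereal ((\<delta> / 2) / sqrt (real M)) \<le> ereal (sqrt (real M)) * P" by simp
  then show ?thesis by (rule order.trans) simp
next
  case False
  then have "ereal ((\<delta> / 2) / sqrt (real M)) \<le> ereal \<nu>" by simp
  then show ?thesis by (rule order.trans) simp
qed


theorem theorem6p8:
  fixes C \<alpha> :: real and n :: "nat \<Rightarrow> nat" and E :: "nat \<Rightarrow> nat set set"
  assumes "C > 0"
    and "\<forall>M. E M \<subseteq> {e. e \<subseteq> {..<n M} \<and> card e = 2}"
    and "(\<lambda>M. real (n M)) \<sim>[at_top] (\<lambda>M. C * real M * ln (real M))"
    and "0 < \<alpha>" and "\<alpha> < 1" and "\<alpha> < 1 - 1 / (2 * C)"
  shows "\<exists>C'>0. \<exists>c0>0. \<exists>c1>0. \<forall>M\<ge>1.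
           \<exists>A \<in> sets (gauss_matrix M (n M)).
             measure (gauss_matrix M (n M)) A \<ge> 1 - c0 * exp (- c1 * real M) \<and>
             (\<forall>\<Phi>\<in>A. \<forall>\<epsilon>. max (ereal (noise_norm (E M) \<epsilon>))
                                  (ereal (sqrt (real M)) * PUN M (n M) (E M) \<Phi> \<alpha> \<epsilon>)
                              \<ge> ereal (C' / sqrt (real M)))"
proof -
  note C = assms(1) and Eas = assms(2) and asy = assms(3) and \<alpha>1 = assms(5)
  define \<eta> where "\<eta> = (1 - \<alpha>) / 4"
  define \<beta> where "\<beta> = 10 / C"
  define r0 where "r0 = exp (- (\<beta> + 1) / \<eta>)"
  define \<delta> where "\<delta> = (r0 / 16)\<^sup>2"
  define T where "T = sqrt (8 / r0)"
  define c where "c = 4 * T / sqrt \<delta> + 5"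
  define h where "h M = sqrt \<delta> / (2 * T * (real M)\<^sup>2)" for M :: nat
  have \<eta>: "\<eta> > 0" using \<alpha>1 by (simp add: \<eta>_def)
  have bp: "\<beta> > 0" using C by (simp add: \<beta>_def)
  have r0p: "r0 > 0" by (simp add: r0_def)
  have r01: "r0 \<le> 1"
  proof -
    have "- (\<beta> + 1) / \<eta> \<le> 0" using bp \<eta> by (intro divide_nonpos_pos) auto
    then show ?thesis by (simp add: r0_def)
  qed
  have sd: "sqrt \<delta> = r0 / 16" using r0p by (simp add: \<delta>_def)
  have \<delta>: "\<delta> > 0" using r0p by (simp add: \<delta>_def)
  have T2: "T\<^sup>2 = 8 / r0" using r0p by (simp add: T_def)
  have T: "T > 0" using r0p by (simp add: T_def)
  have T1: "T \<ge> 1"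
  proof -
    have "8 / r0 \<ge> 1" using r0p r01 by (simp add: field_simps)
    then show ?thesis unfolding T_def by simp
  qed
  have c1: "c \<ge> 1" using T \<delta> by (simp add: c_def)
  have rb: "8 * sqrt \<delta> + 4 / T\<^sup>2 = r0" unfolding sd T2 using r0p by (simp add: field_simps)
  have ev1: "eventually (\<lambda>M. norm (real (n M)) \<ge> (1/2) * norm (C * real M * ln (real M))) at_top"
    by (rule asymp_equiv_imp_eventually_ge[OF asy]) simp
  then obtain N1 where N1: "\<And>M. M \<ge> N1 \<Longrightarrow> norm (real (n M)) \<ge> (1/2) * norm (C * real M * ln (real M))"
    unfolding eventually_at_top_linorder by blast
  define Lb where "Lb = max (2 * ln c + 1) (8 / ((1 - \<alpha>) * C))"
  define N2 where "N2 = nat \<lceil>exp Lb\<rceil> + 1"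
  define M0 where "M0 = max (max N1 N2) 2"
  have lnM: "ln (real M) \<ge> Lb" if "M \<ge> N2" for M :: nat
  proof -
    have "exp Lb \<le> of_int \<lceil>exp Lb\<rceil>" by (rule le_of_int_ceiling)
    also have "\<dots> \<le> real M" using that unfolding N2_def by linarith
    finally have "exp Lb \<le> real M" .
    then show ?thesis by (metis exp_gt_zero ln_exp ln_le_cancel_iff order_less_le_trans)
  qed
  have nb: "real (n M) \<ge> (C / 2) * real M * ln (real M)" if "M \<ge> M0" for M
  proof -
    have "M \<ge> N1" "M \<ge> N2" "M \<ge> 2" using that unfolding M0_def by auto
    have "ln (real M) \<ge> 0" using \<open>M \<ge> 2\<close> by simp
    then have "norm (C * real M * ln (real M)) = C * real M * ln (real M)" using C by simp
    then show ?thesis using N1[OF \<open>M \<ge> N1\<close>] by simp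
  qed
  have main: "\<forall>M\<ge>1. \<exists>A \<in> sets (gauss_matrix M (n M)).
             measure (gauss_matrix M (n M)) A \<ge> 1 - exp (real M0) * exp (- 1 * real M) \<and>
             (\<forall>\<Phi>\<in>A. \<forall>\<epsilon>. max (ereal (noise_norm (E M) \<epsilon>))
                                  (ereal (sqrt (real M)) * PUN M (n M) (E M) \<Phi> \<alpha> \<epsilon>)
                              \<ge> ereal ((\<delta> / 2) / sqrt (real M)))"
  proof (intro allI impI)
    fix M :: nat assume M: "M \<ge> 1"
    show "\<exists>A \<in> sets (gauss_matrix M (n M)).
             measure (gauss_matrix M (n M)) A \<ge> 1 - exp (real M0) * exp (- 1 * real M) \<and>
             (\<forall>\<Phi>\<in>A. \<forall>\<epsilon>. max (ereal (noise_norm (E M) \<epsilon>))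
                                  (ereal (sqrt (real M)) * PUN M (n M) (E M) \<Phi> \<alpha> \<epsilon>)
                              \<ge> ereal ((\<delta> / 2) / sqrt (real M)))"
    proof (cases "M \<ge> M0")
      case False
      have "1 - exp (real M0) * exp (- 1 * real M) \<le> 0"
      proof -
        have "exp (real M0) * exp (- 1 * real M) = exp (real M0 - real M)" by (simp add: exp_diff exp_minus field_simps)
        moreover have "exp (real M0 - real M) \<ge> 1" using False by simp
        ultimately show ?thesis by simp
      qed
      then show ?thesis by (intro bexI[of _ "{}"]) auto
    next
      case True
      have M2: "M \<ge> 2" and MN2: "M \<ge> N2" using True unfolding M0_def by auto
      have Mr: "real M \<ge> 1" using M by simp
      have nbM: "real (n M) \<ge> (C / 2) * real M * ln (real M)" by (rule nb[OF True])
      have lnb: "ln (real M) \<ge> 2 * ln c + 1" "ln (real M) \<ge> 8 / ((1 - \<alpha>) * C)"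
        using lnM[OF MN2] unfolding Lb_def by auto
      have n4: "real (n M) \<ge> 4 * real M / (1 - \<alpha>)"
      proof -
        have "(C / 2) * real M * (8 / ((1 - \<alpha>) * C)) \<le> (C / 2) * real M * ln (real M)"
          using lnb(2) C Mr by (intro mult_left_mono) auto
        moreover have "(C / 2) * real M * (8 / ((1 - \<alpha>) * C)) = 4 * real M / (1 - \<alpha>)"
          using C \<alpha>1 by (simp add: field_simps)
        ultimately show ?thesis using nbM by linarith
      qed
      have a4: "4 * real M / (1 - \<alpha>) \<ge> 4 * real M" using \<alpha>1 assms(4) Mr by (simp add: field_simps)
      have n1: "n M \<ge> 1"
      proof -
        have "real (n M) \<ge> 4" using n4 a4 Mr by linarith
        then show ?thesis by simp
      qed
      define K where "K = nat \<lceil>\<eta> * real (n M)\<rceil>"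
      have Kr: "real K \<ge> \<eta> * real (n M)" unfolding K_def by linarith
      have Kr2: "real K \<le> \<eta> * real (n M) + 1"
      proof -
        have "\<eta> * real (n M) \<ge> 0" using \<eta> by simp
        then have "real K = of_int \<lceil>\<eta> * real (n M)\<rceil>" unfolding K_def by simp
        also have "\<dots> \<le> \<eta> * real (n M) + 1" by linarith
        finally show ?thesis .
      qed
      have K1: "K \<ge> 1"
      proof -
        have "\<eta> * real (n M) > 0" using \<eta> n1 by simp
        then show ?thesis unfolding K_def by linarith
      qed
      have K2: "K + M \<le> nat \<lfloor>(1 - \<alpha>) * real (n M)\<rfloor> + 1"
      proof -
        have fl: "real (nat \<lfloor>(1 - \<alpha>) * real (n M)\<rfloor>) \<ge> (1 - \<alpha>) * real (n M) - 1"
          using \<alpha>1 by linarith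
        have "(1 - \<alpha>) * real (n M) \<ge> 4 * real M"
          using n4 \<alpha>1 by (simp add: field_simps)
        moreover have "\<eta> * real (n M) = (1 - \<alpha>) * real (n M) / 4" by (simp add: \<eta>_def)
        ultimately have "real K + real M \<le> real (nat \<lfloor>(1 - \<alpha>) * real (n M)\<rfloor>) + 1"
          using Kr2 fl Mr by linarith
        then show ?thesis by linarith
      qed
      have hp: "h M > 0" using \<delta> T Mr by (simp add: h_def)
      have h2: "4 * h M * M \<le> 3 / 4"
      proof -
        have "4 * h M * M = 2 * sqrt \<delta> / (T * M)" using Mr by (simp add: h_def power2_eq_square field_simps)
        also have "\<dots> \<le> 2 * sqrt \<delta> / 1"
        proof (intro divide_left_mono)
          show "1 \<le> T * real M" using mult_mono[of 1 T 1 "real M"] T1 Mr by simp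
        qed (use T1 Mr \<delta> in auto)
        also have "\<dots> \<le> 3 / 4" using sd r01 by simp
        finally show ?thesis .
      qed
      have h3: "M * (2 * h M * T) \<le> sqrt (\<delta> / M)"
      proof -
        have "M * (2 * h M * T) = sqrt \<delta> / M" using Mr T by (simp add: h_def power2_eq_square field_simps)
        also have "\<dots> \<le> sqrt \<delta> / sqrt M"
        proof (intro divide_left_mono)
          have "real M \<le> real M * real M" using Mr by (simp add: mult_le_cancel_left1)
          then have "sqrt (real M) \<le> sqrt (real M * real M)" by (rule real_sqrt_le_mono)
          then show "sqrt (real M) \<le> real M" by simp
        qed (use \<delta> Mr in auto)
        also have "\<dots> = sqrt (\<delta> / M)" by (simp add: real_sqrt_divide)
        finally show ?thesis .
      qed
      obtain A where A: "A \<in> sets (gauss_matrix M (n M))"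
        "measure (gauss_matrix M (n M)) A \<ge> 1 - card (Net M (h M)) * (2 ^ n M *
          (2 * (2 * sqrt (\<delta> / M)) / (sqrt ((1 / M) / 2) * sqrt (1 / 4) * sqrt (2 * pi)) + M * (4 * (1 / M) / T\<^sup>2)) ^ K)"
        "\<forall>\<Phi>\<in>A. \<forall>x. (\<Sum>k<M. (cmod (x k))\<^sup>2) = 1 \<longrightarrow>
          card {i. i < n M \<and> (cmod (cinner M x (col \<Phi> i)))\<^sup>2 < \<delta> / M} + M \<le> nat \<lfloor>(1 - \<alpha>) * real (n M)\<rfloor>"
        using prob_main[OF M n1 \<delta> T hp h2 h3 K1 K2] by (elim bexE conjE) (rule that, assumption+)
      define rr where "rr = 2 * (2 * sqrt (\<delta> / M)) / (sqrt ((1 / M) / 2) * sqrt (1 / 4) * sqrt (2 * pi)) + M * (4 * (1 / M) / T\<^sup>2)"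
      have rr0: "rr \<ge> 0" unfolding rr_def using \<delta> T Mr by (intro add_nonneg_nonneg) auto
      have rrr: "rr \<le> r0" unfolding rr_def using r_simp[OF M _ T, of \<delta>] \<delta> rb by simp
      have cardN: "real (card (Net M (h M))) \<le> (c * (real M)\<^sup>2) ^ (2 * M)"
      proof -
        have g: "real_of_int (2 * gridR (h M) + 1) \<le> c * (real M)\<^sup>2"
        proof -
          have "real_of_int (gridR (h M)) \<le> 1 / h M + 2"
            unfolding gridR_def by linarith
          moreover have "1 / h M = 2 * T * (real M)\<^sup>2 / sqrt \<delta>" unfolding h_def by simp
          ultimately have "real_of_int (2 * gridR (h M) + 1) \<le> 4 * T * (real M)\<^sup>2 / sqrt \<delta> + 5" by simp
          also have "\<dots> \<le> 4 * T * (real M)\<^sup>2 / sqrt \<delta> + 5 * (real M)\<^sup>2" using Mr by (simp add: one_le_power)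
          also have "\<dots> = c * (real M)\<^sup>2" unfolding c_def by (simp add: field_simps)
          finally show ?thesis .
        qed
        have gp: "2 * gridR (h M) + 1 \<ge> 0"
        proof -
          have "1 / h M > 0" using hp by simp
          then have "- 1 < 1 / h M" by linarith
          then have "\<lceil>1 / h M\<rceil> \<ge> 0" by simp
          then show ?thesis unfolding gridR_def by simp
        qed
        have "real (card (Net M (h M))) \<le> real (nat (2 * gridR (h M) + 1) ^ (2 * M))"
          using card_Net[of M "h M"] by linarith
        also have "\<dots> = (real_of_int (2 * gridR (h M) + 1)) ^ (2 * M)" using gp by simp
        also have "\<dots> \<le> (c * (real M)\<^sup>2) ^ (2 * M)" using g gp by (intro power_mono) auto
        finally show ?thesis .
      qed
      have bound: "real (card (Net M (h M))) * (2 ^ n M * rr ^ K) \<le> exp (- real M)"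
      proof (rule final_exp[OF M C \<eta> \<beta>_def nbM lnb(1) c1 Kr rr0 rrr r0_def])
        show "real (card (Net M (h M))) \<le> (c * real (M\<^sup>2)) ^ (2 * M)" using cardN by simp
      qed
      have meas: "measure (gauss_matrix M (n M)) A \<ge> 1 - exp (real M0) * exp (- 1 * real M)"
      proof -
        have "exp (- real M) \<le> exp (real M0) * exp (- 1 * real M)" by simp
        then show ?thesis using A(2) bound unfolding rr_def by linarith
      qed
      have prp: "max (ereal (noise_norm (E M) \<epsilon>)) (ereal (sqrt (real M)) * PUN M (n M) (E M) \<Phi> \<alpha> \<epsilon>)
                  \<ge> ereal ((\<delta> / 2) / sqrt (real M))" if \<Phi>: "\<Phi> \<in> A" for \<Phi> \<epsilon>
      proof (rule final_max[OF M \<delta>])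
        assume "noise_norm (E M) \<epsilon> < (\<delta> / 2) / sqrt M"
        then show "PUN M (n M) (E M) \<Phi> \<alpha> \<epsilon> \<ge> ereal ((\<delta> / 2) / M)"
          by (rule pun_lower[OF M \<delta> Eas[rule_format, of M]]) (rule A(3)[rule_format, OF \<Phi>], assumption)
      qed
      show ?thesis by (intro bexI[OF _ A(1)] conjI meas ballI allI prp)
    qed
  qed
  show ?thesis
    by (rule exI[of _ "\<delta> / 2"], rule conjI, use \<delta> in simp, rule exI[of _ "exp (real M0)"], rule conjI, simp,
        rule exI[of _ "1::real"], rule conjI, simp, rule main)
qed


end
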